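(* Let $r\in(0,1]$ and $n\in\mathbb N$. For continuous functions $a_{\mathbf P}:(0,\infty)\to\mathbb R$, indexed by the partitions $\mathbf P=\{P_1,\dots,P_l\}$ of $\{1,\dots,n\}$ with $|P_i|\le 1/r$ for all $i$, the family $$(\tilde\Theta^n_{\Omega;r})_{\mu_r}=\sum_{\mathbf P}a_{\mathbf P}\big(\|\pi^{1/r}(\mu_r)\|\big)(\tau^{\mathbf P}_{\Omega;r})_{\mu_r}$$ is a congruent family of $n$-tensor fields on $\mathcal M^r(\Omega)$. Furthermore, for constants $c_{\mathbf P}\in\mathbb R$, indexed by the partitions $\mathbf P=\{P_1,\dots,P_l\}$ of $\{1,\dots,n\}$ with $1<|P_i|\le 1/r$ for all $i$, the family $\Theta^n_{\Omega;r}=\sum_{\mathbf P}c_{\mathbf P}\tau^{\mathbf P}_{\Omega;r}$ is a congruent family of $n$-tensor fields on $\mathcal P^r(\Omega)$.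
   Context: For a measurable space $\Omega$: $\mathcal S(\Omega)$ finite signed measures, $\mathcal M(\Omega)$ finite measures with $\|\mu\|=\mu(\Omega)$, $\mathcal P(\Omega)$ probability measures. For $r\in(0,1]$, $\mathcal S^r(\Omega)$ is the Banach lattice of $r$-th powers of finite signed measures, whose elements are $\phi\mu^r$ with $\mu\in\mathcal M(\Omega)$, $\phi\in L^{1/r}(\Omega,\mu)$ (with $\phi\mu^r=\psi\nu^r$ iff $\phi(d\mu/d\rho)^r=\psi(d\nu/d\rho)^r$ $\rho$-a.e. for a dominating $\rho$); $\pi^{1/r}(\phi\mu^r)=\mathrm{sign}(\phi)|\phi|^{1/r}\mu$, so $\pi^{1/r}(\mu^r)=\mu$. $\mathcal M^r(\Omega)=\{\mu^r:\mu\in\mathcal M(\Omega)\}$, $\mathcal P^r(\Omega)=\{\mu^r:\mu\in\mathcal P(\Omega)\}$, with tangent spaces $T_{\mu^r}\mathcal M^r(\Omega)=\{\phi\mu^r:\phi\in L^{1/r}(\Omega,\mu)\}$ and $T_{\mu^r}\mathcal P^r(\Omega)=\{\phi\mu^r:\int\phi\,d\mu=0\}$. Canonical tensors: for $m\ge1$, $0<r\le1/m$, $(\tau^m_{\Omega;r})_{\mu^r}(\phi_1\mu^r,\dots,\phi_m\mu^r)=r^{-m}\int\phi_1\cdots\phi_m\,d\mu$; for a partition $\mathbf P=\{P_1,\dots,P_l\}$ of $\{1,\dots,n\}$ with $|P_i|\le1/r$, $(\tau^{\mathbf P}_{\Omega;r})_{\mu^r}(V_1,\dots,V_n)=\prod_i(\tau^{|P_i|}_{\Omega;r})_{\mu^r}((V_j)_{j\in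 P_i})$. A Markov kernel $K:\Omega\to\mathcal P(\Omega')$ induces $K_*\mu(A')=\int K(\omega)(A')d\mu(\omega)$; it is congruent if there is a measurable $\kappa:\Omega'\to\Omega$ with $\kappa_*K(\omega)=\delta_\omega$. The formal derivative of $K_r(\mu^r)=(K_*\mu)^r$ is $d_{\mu^r}K_r(\phi\mu^r)=\frac{d\{K_*(\phi\mu)\}}{d\mu'}\mu'^r$, $\mu'=K_*\mu$, and $(K_r^*\Psi)_{\mu^r}(V_1,\dots,V_n)=\Psi_{(K_*\mu)^r}(d_{\mu^r}K_rV_1,\dots,d_{\mu^r}K_rV_n)$. A family $(\Theta_\Omega)$ of $n$-tensor fields (continuous families of multilinear forms on the tangent spaces) on $\mathcal M^r(\Omega)$ (or $\mathcal P^r(\Omega)$), one for each measurable space, is congruent if $K_r^*\Theta_{\Omega'}=\Theta_\Omega$ for every congruent Markov kernel $K:\Omega\to\mathcal P(\Omega')$. *)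

theory Defs
  imports "HOL-Probability.Probability" "HOL-Library.Disjoint_Sets"
begin

(* A measurable space Omega is an 'a measure (only its
   sigma-algebra matters).  A point mu^r of M^r(Omega) is represented by the finite
   measure mu; a tangent vector phi mu^r at mu^r is represented by its density phi,
   a function in L^{1/r}(Omega, mu). *)

definition Mr_point :: "'a measure \<Rightarrow> 'a measure \<Rightarrow> bool" where
  "Mr_point \<Omega> \<mu> \<longleftrightarrow> sets \<mu> = sets \<Omega> \<and> finite_measure \<mu> \<and> emeasure \<mu> (space \<mu>) \<noteq> 0"

definition Pr_point :: "'a measure \<Rightarrow> 'a measure \<Rightarrow> bool" where
  "Pr_point \<Omega> \<mu> \<longleftrightarrow> sets \<mu> = sets \<Omega> \<and> prob_space \<mu>"

definition Lr_dens :: "real \<Rightarrow> 'a measure \<Rightarrow> ('a \<Rightarrow> real) \<Rightarrow> bool" where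
  "Lr_dens r \<mu> \<phi> \<longleftrightarrow> \<phi> \<in> borel_measurable \<mu> \<and> integrable \<mu> (\<lambda>x. \<bar>\<phi> x\<bar> powr (1 / r))"

definition TM :: "real \<Rightarrow> 'a measure \<Rightarrow> ('a \<Rightarrow> real) \<Rightarrow> bool" where
  "TM r \<mu> \<phi> \<longleftrightarrow> Lr_dens r \<mu> \<phi>"

definition TP :: "real \<Rightarrow> 'a measure \<Rightarrow> ('a \<Rightarrow> real) \<Rightarrow> bool" where
  "TP r \<mu> \<phi> \<longleftrightarrow> Lr_dens r \<mu> \<phi> \<and> (\<integral>x. \<phi> x \<partial>\<mu>) = 0"

(* Norm distance in S^r(Omega) between phi mu^r and psi nu^r, computed with the
   dominating measure rho = mu + nu. *)
definition dom_sum :: "'a measure \<Rightarrow> 'a measure \<Rightarrow> 'a measure" where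
  "dom_sum \<mu> \<nu> = measure_of (space \<mu>) (sets \<mu>) (\<lambda>A. emeasure \<mu> A + emeasure \<nu> A)"

definition Sr_dist :: "real \<Rightarrow> 'a measure \<Rightarrow> ('a \<Rightarrow> real) \<Rightarrow> 'a measure \<Rightarrow> ('a \<Rightarrow> real) \<Rightarrow> real" where
  "Sr_dist r \<mu> \<phi> \<nu> \<psi> =
     (let \<rho> = dom_sum \<mu> \<nu> in
       (\<integral>x. \<bar>\<phi> x * enn2real (RN_deriv \<rho> \<mu> x) powr r - \<psi> x * enn2real (RN_deriv \<rho> \<nu> x) powr r\<bar> powr (1 / r) \<partial>\<rho>) powr r)"

(* An n-tensor field on the manifold with points Pt and tangent spaces T:
   well defined on tangent vectors (a.e. classes), multilinear in each of the n
   arguments, and continuous on the n-fold tangent product as a subset of S^r(Omega)^(n+1). *)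
definition tensor_field :: "real \<Rightarrow> nat \<Rightarrow> ('a measure \<Rightarrow> bool) \<Rightarrow> ('a measure \<Rightarrow> ('a \<Rightarrow> real) \<Rightarrow> bool)
    \<Rightarrow> ('a measure \<Rightarrow> (nat \<Rightarrow> 'a \<Rightarrow> real) \<Rightarrow> real) \<Rightarrow> bool" where
  "tensor_field r n Pt T \<Theta> \<longleftrightarrow>
     (\<forall>\<mu> V W. Pt \<mu> \<and> (\<forall>j\<in>{1..n}. T \<mu> (V j) \<and> T \<mu> (W j) \<and> (AE x in \<mu>. V j x = W j x))
        \<longrightarrow> \<Theta> \<mu> V = \<Theta> \<mu> W) \<and>
     (\<forall>\<mu> V i \<psi> c. Pt \<mu> \<and> (\<forall>j\<in>{1..n}. T \<mu> (V j)) \<and> i \<in> {1..n} \<and> T \<mu> \<psi>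
        \<longrightarrow> \<Theta> \<mu> (V(i := (\<lambda>x. c * V i x + \<psi> x))) = c * \<Theta> \<mu> V + \<Theta> \<mu> (V(i := \<psi>))) \<and>
     (\<forall>\<mu> V. Pt \<mu> \<and> (\<forall>j\<in>{1..n}. T \<mu> (V j)) \<longrightarrow>
        (\<forall>e>0. \<exists>d>0. \<forall>\<nu> W. Pt \<nu> \<and> (\<forall>j\<in>{1..n}. T \<nu> (W j))
            \<and> Sr_dist r \<mu> (\<lambda>_. 1) \<nu> (\<lambda>_. 1) < d \<and> (\<forall>j\<in>{1..n}. Sr_dist r \<mu> (V j) \<nu> (W j) < d)
          \<longrightarrow> \<bar>\<Theta> \<nu> W - \<Theta> \<mu> V\<bar> < e))"

definition congruent_kernel :: "'a measure \<Rightarrow> 'b measure \<Rightarrow> ('a \<Rightarrow> 'b measure) \<Rightarrow> bool" where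
  "congruent_kernel \<Omega> \<Omega>' K \<longleftrightarrow> K \<in> \<Omega> \<rightarrow>\<^sub>M prob_algebra \<Omega>' \<and>
     (\<exists>\<kappa> \<in> \<Omega>' \<rightarrow>\<^sub>M \<Omega>. \<forall>\<omega>\<in>space \<Omega>. distr (K \<omega>) \<Omega> \<kappa> = return \<Omega> \<omega>)"

definition kpush :: "'b measure \<Rightarrow> ('a \<Rightarrow> 'b measure) \<Rightarrow> 'a measure \<Rightarrow> 'b measure" where
  "kpush \<Omega>' K \<mu> = measure_of (space \<Omega>') (sets \<Omega>') (\<lambda>A. \<integral>\<^sup>+\<omega>. emeasure (K \<omega>) A \<partial>\<mu>)"

(* density d{K_*(phi mu)}/d{K_* mu} : the formal derivative of K_r applied to phi mu^r *)
definition kderiv :: "'b measure \<Rightarrow> ('a \<Rightarrow> 'b measure) \<Rightarrow> 'a measure \<Rightarrow> ('a \<Rightarrow> real) \<Rightarrow> 'b \<Rightarrow> real" where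
  "kderiv \<Omega>' K \<mu> \<phi> = (SOME g. g \<in> borel_measurable \<Omega>' \<and> integrable (kpush \<Omega>' K \<mu>) g \<and>
      (\<forall>A\<in>sets \<Omega>'. set_lebesgue_integral (kpush \<Omega>' K \<mu>) A g = (\<integral>\<omega>. \<phi> \<omega> * measure (K \<omega>) A \<partial>\<mu>)))"

definition pullback :: "'b measure \<Rightarrow> ('a \<Rightarrow> 'b measure) \<Rightarrow> ('b measure \<Rightarrow> (nat \<Rightarrow> 'b \<Rightarrow> real) \<Rightarrow> real)
    \<Rightarrow> 'a measure \<Rightarrow> (nat \<Rightarrow> 'a \<Rightarrow> real) \<Rightarrow> real" where
  "pullback \<Omega>' K \<Psi> \<mu> V = \<Psi> (kpush \<Omega>' K \<mu>) (\<lambda>j. kderiv \<Omega>' K \<mu> (V j))"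

definition tau_block :: "real \<Rightarrow> 'a measure \<Rightarrow> nat set \<Rightarrow> (nat \<Rightarrow> 'a \<Rightarrow> real) \<Rightarrow> real" where
  "tau_block r \<mu> B V = r powr (- real (card B)) * (\<integral>\<omega>. (\<Prod>j\<in>B. V j \<omega>) \<partial>\<mu>)"

definition tauP :: "real \<Rightarrow> 'a measure \<Rightarrow> nat set set \<Rightarrow> (nat \<Rightarrow> 'a \<Rightarrow> real) \<Rightarrow> real" where
  "tauP r \<mu> P V = (\<Prod>B\<in>P. tau_block r \<mu> B V)"

definition partsM :: "real \<Rightarrow> nat \<Rightarrow> nat set set set" where
  "partsM r n = {P. partition_on {1..n} P \<and> (\<forall>B\<in>P. real (card B) \<le> 1 / r)}"

definition partsP :: "real \<Rightarrow> nat \<Rightarrow> nat set set set" where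
  "partsP r n = {P. partition_on {1..n} P \<and> (\<forall>B\<in>P. 1 < card B \<and> real (card B) \<le> 1 / r)}"

definition tildeTheta :: "real \<Rightarrow> nat \<Rightarrow> (nat set set \<Rightarrow> real \<Rightarrow> real) \<Rightarrow> 'a measure \<Rightarrow> (nat \<Rightarrow> 'a \<Rightarrow> real) \<Rightarrow> real" where
  "tildeTheta r n a \<mu> V = (\<Sum>P\<in>partsM r n. a P (measure \<mu> (space \<mu>)) * tauP r \<mu> P V)"

definition Theta :: "real \<Rightarrow> nat \<Rightarrow> (nat set set \<Rightarrow> real) \<Rightarrow> 'a measure \<Rightarrow> (nat \<Rightarrow> 'a \<Rightarrow> real) \<Rightarrow> real" where
  "Theta r n c \<mu> V = (\<Sum>P\<in>partsP r n. c P * tauP r \<mu> P V)"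

end

theory Submission
  imports Defs
begin


lemma wamgm:
  fixes a w :: "'i \<Rightarrow> real"
  assumes "finite I" "\<forall>i\<in>I. 0 \<le> a i" "\<forall>i\<in>I. 0 \<le> w i" "sum w I = 1"
  shows "(\<Prod>i\<in>I. a i powr w i) \<le> (\<Sum>i\<in>I. w i * a i)"
proof (cases "\<exists>i\<in>I. a i = 0")
  case True
  then have "\<exists>i\<in>I. a i powr w i = 0" by auto
  then have "(\<Prod>i\<in>I. a i powr w i) = 0" using assms(1) by (rule prod_zero[rotated])
  moreover have "0 \<le> (\<Sum>i\<in>I. w i * a i)" using assms by (intro sum_nonneg) auto
  ultimately show ?thesis by linarith
next
  case False
  then have pos: "\<forall>i\<in>I. 0 < a i" using assms(2) by force
  have ne: "I \<noteq> {}" using assms(4) by auto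
  have "exp (\<Sum>i\<in>I. w i *\<^sub>R ln (a i)) \<le> (\<Sum>i\<in>I. w i * exp (ln (a i)))"
    by (rule convex_on_sum[OF assms(1) ne exp_convex]) (use assms in auto)
  moreover have "exp (\<Sum>i\<in>I. w i *\<^sub>R ln (a i)) = (\<Prod>i\<in>I. a i powr w i)"
    using pos by (auto simp: exp_sum[OF assms(1)] powr_def intro!: prod.cong)
  ultimately show ?thesis using pos by simp
qed

lemma holder_gen:
  fixes Z :: "'i \<Rightarrow> 'a \<Rightarrow> real" and w C :: "'i \<Rightarrow> real"
  assumes I: "finite I" and w: "\<forall>i\<in>I. 0 \<le> w i" "sum w I = 1"
    and Zm: "\<forall>i\<in>I. Z i \<in> borel_measurable M" and Zn: "\<forall>i\<in>I. \<forall>x\<in>space M. 0 \<le> Z i x"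
    and Zi: "\<forall>i\<in>I. integrable M (Z i)" and C: "\<forall>i\<in>I. integral\<^sup>L M (Z i) \<le> C i" "\<forall>i\<in>I. 0 < C i"
  shows "integrable M (\<lambda>x. \<Prod>i\<in>I. Z i x powr w i)"
    and "(\<integral>x. (\<Prod>i\<in>I. Z i x powr w i) \<partial>M) \<le> (\<Prod>i\<in>I. C i powr w i)"
proof -
  define K where "K = (\<Prod>i\<in>I. C i powr w i)"
  have Kpos: "0 < K" unfolding K_def by (intro prod_pos) (use C in auto)
  define b where "b x = K * (\<Sum>i\<in>I. w i * (Z i x / C i))" for x
  have bi: "integrable M b" unfolding b_def
    using Zi by (intro integrable_mult_right integrable_sum integrable_divide) auto
  have pt: "(\<Prod>i\<in>I. Z i x powr w i) \<le> b x" if x: "x \<in> space M" for x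
  proof -
    have "(\<Prod>i\<in>I. Z i x powr w i) = K * (\<Prod>i\<in>I. (Z i x / C i) powr w i)"
      unfolding K_def prod.distrib[symmetric] using C Zn x
      by (intro prod.cong) (auto simp: powr_divide less_imp_le)
    also have "\<dots> \<le> K * (\<Sum>i\<in>I. w i * (Z i x / C i))"
      using Kpos C Zn x w I by (intro mult_left_mono wamgm) (auto simp: less_imp_le)
    finally show ?thesis unfolding b_def .
  qed
  have meas: "(\<lambda>x. \<Prod>i\<in>I. Z i x powr w i) \<in> borel_measurable M"
    using Zm by (intro borel_measurable_prod) auto
  show int: "integrable M (\<lambda>x. \<Prod>i\<in>I. Z i x powr w i)"
  proof (rule Bochner_Integration.integrable_bound[OF bi meas])
    show "AE x in M. norm (\<Prod>i\<in>I. Z i x powr w i) \<le> norm (b x)"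
    proof (rule AE_I2)
      fix x assume x: "x \<in> space M"
      have "0 \<le> (\<Prod>i\<in>I. Z i x powr w i)" by (intro prod_nonneg) auto
      then show "norm (\<Prod>i\<in>I. Z i x powr w i) \<le> norm (b x)" using pt[OF x] by simp
    qed
  qed
  have "(\<integral>x. (\<Prod>i\<in>I. Z i x powr w i) \<partial>M) \<le> integral\<^sup>L M b"
    by (rule integral_mono[OF int bi]) (use pt in auto)
  also have "integral\<^sup>L M b = K * (\<Sum>i\<in>I. w i * (integral\<^sup>L M (Z i) / C i))"
    unfolding b_def using Zi by (simp add: integral_sum integrable_divide)
  also have "\<dots> \<le> K * (\<Sum>i\<in>I. w i * 1)"
    using Kpos w C by (intro mult_left_mono sum_mono mult_left_mono) (auto simp: divide_le_eq)
  also have "\<dots> = K" using w by simp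
  finally show "(\<integral>x. (\<Prod>i\<in>I. Z i x powr w i) \<partial>M) \<le> (\<Prod>i\<in>I. C i powr w i)" unfolding K_def .
qed



lemma powr_sum_le:
  fixes x y p :: real
  assumes "0 \<le> x" "0 \<le> y" "0 \<le> p"
  shows "(x + y) powr p \<le> 2 powr p * (x powr p + y powr p)"
proof -
  have "(x + y) powr p \<le> (2 * max x y) powr p" using assms by (intro powr_mono2) auto
  also have "\<dots> = 2 powr p * (max x y) powr p" by (simp add: powr_mult)
  also have "(max x y) powr p \<le> x powr p + y powr p"
    by (cases "x \<le> y") (auto simp: max_def)
  then have "2 powr p * (max x y) powr p \<le> 2 powr p * (x powr p + y powr p)"
    by (intro mult_left_mono) auto
  finally show ?thesis .
qed

lemma powr_diff_le_aux:
  fixes x y p :: real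
  assumes "0 \<le> y" "y \<le> x" "1 \<le> p"
  shows "x powr p - y powr p \<le> p * (x - y) * x powr (p - 1)"
proof (cases "y = 0")
  case True
  show ?thesis
  proof (cases "x = 0")
    case True then show ?thesis using \<open>y = 0\<close> by simp
  next
    case False
    then have xp: "0 < x" using assms by auto
    have "x powr p = x * x powr (p - 1)" using powr_add[of x 1 "p - 1"] xp by simp
    also have "\<dots> \<le> p * x * x powr (p - 1)" using xp assms
      by (intro mult_right_mono) auto
    finally show ?thesis using True by simp
  qed
next
  case False
  then have yp: "0 < y" using assms by auto
  show ?thesis
  proof (cases "y = x")
    case True then show ?thesis by simp
  next
    case False
    then have lt: "y < x" using assms by auto
    obtain z where z: "y < z" "z < x" "x powr p - y powr p = (x - y) * (p * z powr (p - 1))"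
    proof -
      have "\<exists>z. y < z \<and> z < x \<and> x powr p - y powr p = (x - y) * (p * z powr (p - 1))"
        by (rule MVT2[OF lt]) (use yp in \<open>auto intro!: has_real_derivative_powr\<close>)
      then show ?thesis using that by blast
    qed
    have "z powr (p - 1) \<le> x powr (p - 1)" using z yp assms by (intro powr_mono2) auto
    then have "(x - y) * (p * z powr (p - 1)) \<le> (x - y) * (p * x powr (p - 1))"
      using lt assms by (intro mult_left_mono) auto
    then show ?thesis using z by (simp add: algebra_simps)
  qed
qed

lemma powr_diff_le:
  fixes x y p :: real
  assumes "0 \<le> x" "0 \<le> y" "1 \<le> p"
  shows "\<bar>x powr p - y powr p\<bar> \<le> p * \<bar>x - y\<bar> * (x + y) powr (p - 1)"
proof (cases "y \<le> x")
  case True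
  have "x powr p - y powr p \<le> p * (x - y) * x powr (p - 1)" by (rule powr_diff_le_aux) (use assms True in auto)
  also have "\<dots> \<le> p * (x - y) * (x + y) powr (p - 1)"
    using assms True by (intro mult_left_mono powr_mono2) auto
  finally show ?thesis using True assms powr_mono2[of p y x] by (simp add: abs_if)
next
  case False
  have "y powr p - x powr p \<le> p * (y - x) * y powr (p - 1)" by (rule powr_diff_le_aux) (use assms False in auto)
  also have "\<dots> \<le> p * (y - x) * (x + y) powr (p - 1)"
    using assms False by (intro mult_left_mono powr_mono2) auto
  finally show ?thesis using False assms powr_mono2[of p x y] by (simp add: abs_if)
qed

lemma powr_subadd:
  fixes u v s :: real
  assumes "0 \<le> u" "0 \<le> v" "0 < s" "s \<le> 1"
  shows "(u + v) powr s \<le> u powr s + v powr s"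
proof (cases "u + v = 0")
  case True then show ?thesis using assms by simp
next
  case False
  then have S: "0 < u + v" using assms by auto
  have a: "u / (u + v) \<le> (u / (u + v)) powr s"
    using powr_mono'[of s 1 "u / (u+v)"] assms S by (simp add: divide_le_eq_1)
  have b: "v / (u + v) \<le> (v / (u + v)) powr s"
    using powr_mono'[of s 1 "v / (u+v)"] assms S by (simp add: divide_le_eq_1)
  have "1 = u / (u + v) + v / (u + v)" using S by (simp add: add_divide_distrib[symmetric])
  also have "\<dots> \<le> (u powr s + v powr s) / (u + v) powr s"
    using a b by (simp add: powr_divide add_divide_distrib)
  finally show ?thesis using S by (simp add: le_divide_eq)
qed

lemma powr_diff_conc:
  fixes a b s :: real
  assumes "0 \<le> a" "0 \<le> b" "0 < s" "s \<le> 1"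
  shows "\<bar>a powr s - b powr s\<bar> \<le> \<bar>a - b\<bar> powr s"
proof (cases "b \<le> a")
  case True
  have "a powr s = (b + (a - b)) powr s" by simp
  also have "\<dots> \<le> b powr s + (a - b) powr s" using assms True by (intro powr_subadd) auto
  finally show ?thesis using True assms powr_mono2[of s b a] by (simp add: abs_if)
next
  case False
  have "b powr s = (a + (b - a)) powr s" by simp
  also have "\<dots> \<le> a powr s + (b - a) powr s" using assms False by (intro powr_subadd) auto
  finally show ?thesis using False assms powr_mono2[of s a b] by (simp add: abs_if abs_minus_commute)
qed

lemma prod_diff_le:
  fixes a b :: "'i \<Rightarrow> real"
  assumes "finite B"
  shows "\<bar>(\<Prod>j\<in>B. a j) - (\<Prod>j\<in>B. b j)\<bar> \<le> (\<Sum>i\<in>B. \<bar>a i - b i\<bar> * (\<Prod>j\<in>B - {i}. \<bar>a j\<bar> + \<bar>b j\<bar>))"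
  using assms
proof (induction B rule: finite_induct)
  case empty then show ?case by simp
next
  case (insert i B)
  define M where "M = (\<lambda>j. \<bar>a j\<bar> + \<bar>b j\<bar>)"
  have PA: "\<bar>\<Prod>j\<in>B. a j\<bar> \<le> (\<Prod>j\<in>B. M j)" unfolding M_def abs_prod
    by (intro prod_mono) auto
  have "(\<Prod>j\<in>insert i B. a j) - (\<Prod>j\<in>insert i B. b j)
      = (a i - b i) * (\<Prod>j\<in>B. a j) + b i * ((\<Prod>j\<in>B. a j) - (\<Prod>j\<in>B. b j))"
    using insert by (simp add: algebra_simps)
  then have "\<bar>(\<Prod>j\<in>insert i B. a j) - (\<Prod>j\<in>insert i B. b j)\<bar>
      \<le> \<bar>a i - b i\<bar> * \<bar>\<Prod>j\<in>B. a j\<bar> + \<bar>b i\<bar> * \<bar>(\<Prod>j\<in>B. a j) - (\<Prod>j\<in>B. b j)\<bar>"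
    by (simp add: abs_mult[symmetric] abs_triangle_ineq)
  also have "\<dots> \<le> \<bar>a i - b i\<bar> * (\<Prod>j\<in>B. M j) + M i * (\<Sum>l\<in>B. \<bar>a l - b l\<bar> * (\<Prod>j\<in>B - {l}. M j))"
    using PA insert.IH unfolding M_def
    by (intro add_mono mult_mono) auto
  also have "\<dots> = (\<Sum>l\<in>insert i B. \<bar>a l - b l\<bar> * (\<Prod>j\<in>insert i B - {l}. M j))"
  proof -
    have "(\<Sum>l\<in>insert i B. \<bar>a l - b l\<bar> * (\<Prod>j\<in>insert i B - {l}. M j))
        = \<bar>a i - b i\<bar> * (\<Prod>j\<in>insert i B - {i}. M j) + (\<Sum>l\<in>B. \<bar>a l - b l\<bar> * (\<Prod>j\<in>insert i B - {l}. M j))"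
      using insert by simp
    also have "(\<Prod>j\<in>insert i B - {i}. M j) = (\<Prod>j\<in>B. M j)" using insert by (simp add: insert_Diff_if)
    also have "(\<Sum>l\<in>B. \<bar>a l - b l\<bar> * (\<Prod>j\<in>insert i B - {l}. M j)) = (\<Sum>l\<in>B. \<bar>a l - b l\<bar> * (M i * (\<Prod>j\<in>B - {l}. M j)))"
    proof (intro sum.cong refl)
      fix l assume l: "l \<in> B"
      then have "insert i B - {l} = insert i (B - {l})" using insert by auto
      then show "\<bar>a l - b l\<bar> * (\<Prod>j\<in>insert i B - {l}. M j) = \<bar>a l - b l\<bar> * (M i * (\<Prod>j\<in>B - {l}. M j))"
        using insert by simp
    qed
    finally show ?thesis by (simp add: sum_distrib_left algebra_simps)
  qed
  finally show ?case unfolding M_def .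
qed



lemma powr_r_p:
  fixes x r :: real
  assumes "0 \<le> x" "0 < r"
  shows "(x powr r) powr (1 / r) = x" "(x powr (1 / r)) powr r = x"
  using assms by (simp_all add: powr_powr)

lemma mass_core:
  fixes \<rho> :: "'a measure" and f g :: "'a \<Rightarrow> real" and r d m :: real
  assumes r: "0 < r" "r \<le> 1"
    and fm[measurable]: "f \<in> borel_measurable \<rho>" and gm[measurable]: "g \<in> borel_measurable \<rho>"
    and fn: "\<forall>x\<in>space \<rho>. 0 \<le> f x" and gn: "\<forall>x\<in>space \<rho>. 0 \<le> g x"
    and fi: "integrable \<rho> f" and gi: "integrable \<rho> g"
    and di: "integrable \<rho> (\<lambda>x. \<bar>f x powr r - g x powr r\<bar> powr (1/r))"
    and dle: "(\<integral>x. \<bar>f x powr r - g x powr r\<bar> powr (1/r) \<partial>\<rho>) \<le> d powr (1/r)"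
    and d: "0 < d" "d \<le> 1"
    and m: "integral\<^sup>L \<rho> f \<le> m" "0 \<le> m"
  shows "(\<integral>x. \<bar>f x - g x\<bar> \<partial>\<rho>) \<le> (1/r) * d * (4 powr (1/r) * (m+1)) powr (1 - r)"
proof -
  define p where "p = 1 / r"
  have p1: "1 \<le> p" unfolding p_def using r by simp
  have pr: "p * r = 1" unfolding p_def using r by simp
  define Z where "Z i x = (if i = (0::nat) then \<bar>f x powr r - g x powr r\<bar> powr p else (f x powr r + g x powr r) powr p)" for i x
  define w where "w i = (if i = (0::nat) then r else 1 - r)" for i
  define C where "C i = (if i = (0::nat) then d powr p else 4 powr p * (m + 1))" for i
  have Z0: "Z 0 = (\<lambda>x. \<bar>f x powr r - g x powr r\<bar> powr p)" unfolding Z_def by auto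
  have Z1: "Z 1 = (\<lambda>x. (f x powr r + g x powr r) powr p)" unfolding Z_def by auto
  have Z0i: "integrable \<rho> (Z 0)" using di unfolding Z0 p_def .
  have ptZ1: "Z 1 x \<le> 4 powr p * (f x + Z 0 x)" if x: "x \<in> space \<rho>" for x
  proof -
    have f0: "0 \<le> f x" "0 \<le> g x" using fn gn x by auto
    have "f x powr r + g x powr r \<le> 2 * f x powr r + \<bar>f x powr r - g x powr r\<bar>" by simp
    then have "(f x powr r + g x powr r) powr p \<le> (2 * f x powr r + \<bar>f x powr r - g x powr r\<bar>) powr p"
      using p1 by (intro powr_mono2) auto
    also have "\<dots> \<le> 2 powr p * ((2 * f x powr r) powr p + \<bar>f x powr r - g x powr r\<bar> powr p)"
      using p1 by (intro powr_sum_le) auto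
    also have "(2 * f x powr r) powr p = 2 powr p * f x"
      using f0 r by (simp add: powr_mult powr_powr p_def)
    also have "2 powr p * (2 powr p * f x + \<bar>f x powr r - g x powr r\<bar> powr p)
        \<le> 2 powr p * (2 powr p * f x + 2 powr p * \<bar>f x powr r - g x powr r\<bar> powr p)"
    proof -
      have "1 \<le> (2::real) powr p" by (rule ge_one_powr_ge_zero) (use p1 in auto)
      then have "\<bar>f x powr r - g x powr r\<bar> powr p \<le> 2 powr p * \<bar>f x powr r - g x powr r\<bar> powr p"
        using mult_right_mono[of 1 "2 powr p" "\<bar>f x powr r - g x powr r\<bar> powr p"] by simp
      then show ?thesis by (intro mult_left_mono add_left_mono) auto
    qed
    also have "\<dots> = (2 powr p * 2 powr p) * (f x + Z 0 x)" unfolding Z0 by (simp add: algebra_simps)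
    also have "2 powr p * 2 powr p = (4::real) powr p" by (simp add: powr_mult[symmetric])
    finally show ?thesis unfolding Z1 .
  qed
  have Z1m: "Z 1 \<in> borel_measurable \<rho>" unfolding Z1 by measurable
  have Z0m: "Z 0 \<in> borel_measurable \<rho>" unfolding Z0 by measurable
  have bi: "integrable \<rho> (\<lambda>x. 4 powr p * (f x + Z 0 x))" using fi Z0i by auto
  have Z1i: "integrable \<rho> (Z 1)"
    by (rule Bochner_Integration.integrable_bound[OF bi Z1m])
       (use ptZ1 fn in \<open>auto intro!: AE_I2 simp: Z_def\<close>)
  have "integral\<^sup>L \<rho> (Z 1) \<le> (\<integral>x. 4 powr p * (f x + Z 0 x) \<partial>\<rho>)"
    by (rule integral_mono[OF Z1i bi]) (use ptZ1 in auto)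
  also have "\<dots> = 4 powr p * (integral\<^sup>L \<rho> f + integral\<^sup>L \<rho> (Z 0))"
    using fi Z0i by simp
  also have "\<dots> \<le> 4 powr p * (m + 1)"
  proof -
    have "integral\<^sup>L \<rho> (Z 0) \<le> 1" using dle d powr_le1[of p d] p1 r unfolding Z0 p_def by auto
    then show ?thesis using m by (intro mult_left_mono) auto
  qed
  finally have C1: "integral\<^sup>L \<rho> (Z 1) \<le> C 1" unfolding C_def by simp
  have C0: "integral\<^sup>L \<rho> (Z 0) \<le> C 0" using dle unfolding C_def Z0 p_def by simp
  have Iset: "{0::nat, 1} = {0, 1}" by simp
  have H: "integrable \<rho> (\<lambda>x. \<Prod>i\<in>{0::nat,1}. Z i x powr w i)"
          "(\<integral>x. (\<Prod>i\<in>{0::nat,1}. Z i x powr w i) \<partial>\<rho>) \<le> (\<Prod>i\<in>{0::nat,1}. C i powr w i)"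
  proof -
    have a: "\<forall>i\<in>{0::nat,1}. 0 \<le> w i" "sum w {0::nat,1} = 1" unfolding w_def using r by auto
    have b: "\<forall>i\<in>{0::nat,1}. Z i \<in> borel_measurable \<rho>" using Z0m Z1m by auto
    have c: "\<forall>i\<in>{0::nat,1}. \<forall>x\<in>space \<rho>. 0 \<le> Z i x" unfolding Z_def by auto
    have e: "\<forall>i\<in>{0::nat,1}. integrable \<rho> (Z i)" using Z0i Z1i by auto
    have g: "\<forall>i\<in>{0::nat,1}. integral\<^sup>L \<rho> (Z i) \<le> C i" using C0 C1 by auto
    have h: "\<forall>i\<in>{0::nat,1}. 0 < C i" unfolding C_def using d m by auto
    show "integrable \<rho> (\<lambda>x. \<Prod>i\<in>{0::nat,1}. Z i x powr w i)"
         "(\<integral>x. (\<Prod>i\<in>{0::nat,1}. Z i x powr w i) \<partial>\<rho>) \<le> (\<Prod>i\<in>{0::nat,1}. C i powr w i)"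
      using holder_gen[OF _ a b c e g h] by auto
  qed
  have pt: "\<bar>f x - g x\<bar> \<le> p * (\<Prod>i\<in>{0::nat,1}. Z i x powr w i)" if x: "x \<in> space \<rho>" for x
  proof -
    have f0: "0 \<le> f x" "0 \<le> g x" using fn gn x by auto
    have "\<bar>f x - g x\<bar> = \<bar>(f x powr r) powr p - (g x powr r) powr p\<bar>"
      using f0 r by (simp add: powr_r_p p_def)
    also have "\<dots> \<le> p * \<bar>f x powr r - g x powr r\<bar> * (f x powr r + g x powr r) powr (p - 1)"
      using p1 by (intro powr_diff_le) auto
    also have "\<bar>f x powr r - g x powr r\<bar> = Z 0 x powr w 0"
      unfolding Z0 w_def using r by (simp add: powr_powr p_def)
    also have "(f x powr r + g x powr r) powr (p - 1) = Z 1 x powr w 1"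
    proof -
      have "p * (1 - r) = p - 1" using pr by (simp add: algebra_simps)
      then show ?thesis unfolding Z1 w_def by (simp add: powr_powr)
    qed
    finally show ?thesis by (simp add: mult.assoc)
  qed
  have "(\<integral>x. \<bar>f x - g x\<bar> \<partial>\<rho>) \<le> (\<integral>x. p * (\<Prod>i\<in>{0::nat,1}. Z i x powr w i) \<partial>\<rho>)"
    by (rule integral_mono) (use fi gi H pt in auto)
  also have "\<dots> \<le> p * (\<Prod>i\<in>{0::nat,1}. C i powr w i)"
    using H p1 by simp
  also have "(\<Prod>i\<in>{0::nat,1}. C i powr w i) = d * (4 powr (1/r) * (m+1)) powr (1 - r)"
    unfolding C_def w_def using d r by (simp add: powr_powr p_def)
  finally show ?thesis unfolding p_def by (simp add: mult.assoc)
qed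



lemma holder_block:
  fixes r :: real and \<rho> :: "'a measure" and X :: "nat \<Rightarrow> 'a \<Rightarrow> real" and Y :: "'a \<Rightarrow> real" and c :: "nat \<Rightarrow> real"
  assumes r: "0 < r" and B: "finite B" "0 \<notin> B" "r * card B \<le> 1"
    and Xm: "\<forall>j\<in>B. X j \<in> borel_measurable \<rho>" and Xn: "\<forall>j\<in>B. \<forall>x\<in>space \<rho>. 0 \<le> X j x"
    and Xi: "\<forall>j\<in>B. integrable \<rho> (\<lambda>x. X j x powr (1/r))"
    and Xc: "\<forall>j\<in>B. (\<integral>x. X j x powr (1/r) \<partial>\<rho>) \<le> c j" "\<forall>j\<in>B. 0 < c j"
    and Ym: "Y \<in> borel_measurable \<rho>" and Yn: "\<forall>x\<in>space \<rho>. 0 \<le> Y x" and Yi: "integrable \<rho> Y"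
    and Yc: "integral\<^sup>L \<rho> Y \<le> c0" "0 < c0"
  shows "integrable \<rho> (\<lambda>x. (\<Prod>j\<in>B. X j x) * (if 1 - r * card B = 0 then 1 else Y x powr (1 - r * card B)))"
    and "(\<integral>x. (\<Prod>j\<in>B. X j x) * (if 1 - r * card B = 0 then 1 else Y x powr (1 - r * card B)) \<partial>\<rho>)
         \<le> (\<Prod>j\<in>B. c j powr r) * (if 1 - r * card B = 0 then 1 else c0 powr (1 - r * card B))"
proof -
  define s where "s = 1 - r * card B"
  have Xpr: "(X j x powr (1/r)) powr r = X j x" if "j \<in> B" "x \<in> space \<rho>" for j x
    using Xn that r by (simp add: powr_powr)
  have sumB: "(\<Sum>j\<in>B. r) = r * card B" by simp
  have "integrable \<rho> (\<lambda>x. (\<Prod>j\<in>B. X j x) * (if s = 0 then 1 else Y x powr s)) \<and>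
        (\<integral>x. (\<Prod>j\<in>B. X j x) * (if s = 0 then 1 else Y x powr s) \<partial>\<rho>)
         \<le> (\<Prod>j\<in>B. c j powr r) * (if s = 0 then 1 else c0 powr s)"
  proof (cases "s = 0")
    case True
    define Z where "Z = (\<lambda>j x. X j x powr (1/r))"
    have H: "integrable \<rho> (\<lambda>x. \<Prod>j\<in>B. Z j x powr r)"
            "(\<integral>x. (\<Prod>j\<in>B. Z j x powr r) \<partial>\<rho>) \<le> (\<Prod>j\<in>B. c j powr r)"
    proof -
      have p: "\<forall>i\<in>B. 0 \<le> r" "sum (\<lambda>_. r) B = 1" "\<forall>i\<in>B. Z i \<in> borel_measurable \<rho>"
        "\<forall>i\<in>B. \<forall>x\<in>space \<rho>. 0 \<le> Z i x" "\<forall>i\<in>B. integrable \<rho> (Z i)"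
        "\<forall>i\<in>B. integral\<^sup>L \<rho> (Z i) \<le> c i" "\<forall>i\<in>B. 0 < c i"
        using r True Xm Xn Xi Xc by (auto simp: s_def Z_def mult.commute)
      show "integrable \<rho> (\<lambda>x. \<Prod>j\<in>B. Z j x powr r)"
            "(\<integral>x. (\<Prod>j\<in>B. Z j x powr r) \<partial>\<rho>) \<le> (\<Prod>j\<in>B. c j powr r)"
        using holder_gen[OF B(1) p] by auto
    qed
    have eq: "\<And>x. x \<in> space \<rho> \<Longrightarrow> (\<Prod>j\<in>B. Z j x powr r) = (\<Prod>j\<in>B. X j x)"
      unfolding Z_def using Xpr by (intro prod.cong) auto
    have "integrable \<rho> (\<lambda>x. \<Prod>j\<in>B. Z j x powr r) = integrable \<rho> (\<lambda>x. \<Prod>j\<in>B. X j x)"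
      by (rule Bochner_Integration.integrable_cong[OF refl eq])
    then have "integrable \<rho> (\<lambda>x. \<Prod>j\<in>B. X j x)" using H(1) by simp
    moreover have "(\<integral>x. (\<Prod>j\<in>B. X j x) \<partial>\<rho>) = (\<integral>x. (\<Prod>j\<in>B. Z j x powr r) \<partial>\<rho>)"
      by (rule Bochner_Integration.integral_cong) (use eq in auto)
    ultimately show ?thesis using True H(2) by simp
  next
    case False
    then have s0: "0 < s" using B(3) unfolding s_def by simp
    define Z where "Z = (\<lambda>j x. if j = 0 then Y x else X j x powr (1/r))"
    define w where "w j = (if j = (0::nat) then s else r)" for j
    define C where "C j = (if j = (0::nat) then c0 else c j)" for j
    have sw: "sum w (insert 0 B) = 1"
    proof -
      have "sum w (insert 0 B) = s + (\<Sum>j\<in>B. w j)" using B by (simp add: w_def)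
      also have "(\<Sum>j\<in>B. w j) = (\<Sum>j\<in>B. r)" using B by (intro sum.cong) (auto simp: w_def)
      finally show ?thesis unfolding s_def by simp
    qed
    have H: "integrable \<rho> (\<lambda>x. \<Prod>j\<in>insert 0 B. Z j x powr w j)"
            "(\<integral>x. (\<Prod>j\<in>insert 0 B. Z j x powr w j) \<partial>\<rho>) \<le> (\<Prod>j\<in>insert 0 B. C j powr w j)"
    proof -
      have p: "\<forall>i\<in>insert 0 B. 0 \<le> w i" "sum w (insert 0 B) = 1" "\<forall>i\<in>insert 0 B. Z i \<in> borel_measurable \<rho>"
        "\<forall>i\<in>insert 0 B. \<forall>x\<in>space \<rho>. 0 \<le> Z i x" "\<forall>i\<in>insert 0 B. integrable \<rho> (Z i)"
        "\<forall>i\<in>insert 0 B. integral\<^sup>L \<rho> (Z i) \<le> C i" "\<forall>i\<in>insert 0 B. 0 < C i"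
      proof -
        have ZB: "\<And>i. i \<in> B \<Longrightarrow> Z i = (\<lambda>x. X i x powr (1/r))" "Z 0 = Y" using B(2) unfolding Z_def by auto
        have CB: "\<And>i. i \<in> B \<Longrightarrow> C i = c i" "C 0 = c0" using B(2) unfolding C_def by auto
        have wB: "\<And>i. i \<in> B \<Longrightarrow> w i = r" "w 0 = s" using B(2) unfolding w_def by auto
        show "\<forall>i\<in>insert 0 B. 0 \<le> w i" "sum w (insert 0 B) = 1" "\<forall>i\<in>insert 0 B. Z i \<in> borel_measurable \<rho>"
        "\<forall>i\<in>insert 0 B. \<forall>x\<in>space \<rho>. 0 \<le> Z i x" "\<forall>i\<in>insert 0 B. integrable \<rho> (Z i)"
        "\<forall>i\<in>insert 0 B. integral\<^sup>L \<rho> (Z i) \<le> C i" "\<forall>i\<in>insert 0 B. 0 < C i"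
          using r s0 sw B Xm Xn Xi Xc Ym Yn Yi Yc by (auto simp: ZB CB wB)
      qed
      have fin: "finite (insert 0 B)" using B by simp
      show "integrable \<rho> (\<lambda>x. \<Prod>j\<in>insert 0 B. Z j x powr w j)"
            "(\<integral>x. (\<Prod>j\<in>insert 0 B. Z j x powr w j) \<partial>\<rho>) \<le> (\<Prod>j\<in>insert 0 B. C j powr w j)"
        using holder_gen[OF fin p] by auto
    qed
    have eq: "(\<Prod>j\<in>insert 0 B. Z j x powr w j) = (\<Prod>j\<in>B. X j x) * Y x powr s" if x: "x \<in> space \<rho>" for x
    proof -
      have "(\<Prod>j\<in>insert 0 B. Z j x powr w j) = Y x powr s * (\<Prod>j\<in>B. Z j x powr w j)"
        using B by (simp add: Z_def w_def)
      also have "(\<Prod>j\<in>B. Z j x powr w j) = (\<Prod>j\<in>B. X j x)"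
        using B Xpr x by (intro prod.cong) (auto simp: Z_def w_def)
      finally show ?thesis by simp
    qed
    have eqC: "(\<Prod>j\<in>insert 0 B. C j powr w j) = (\<Prod>j\<in>B. c j powr r) * c0 powr s"
    proof -
      have "(\<Prod>j\<in>insert 0 B. C j powr w j) = c0 powr s * (\<Prod>j\<in>B. C j powr w j)"
        using B by (simp add: C_def w_def)
      also have "(\<Prod>j\<in>B. C j powr w j) = (\<Prod>j\<in>B. c j powr r)"
        using B by (intro prod.cong) (auto simp: C_def w_def)
      finally show ?thesis by simp
    qed
    have "integrable \<rho> (\<lambda>x. \<Prod>j\<in>insert 0 B. Z j x powr w j) = integrable \<rho> (\<lambda>x. (\<Prod>j\<in>B. X j x) * Y x powr s)"
      by (rule Bochner_Integration.integrable_cong[OF refl eq])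
    then have "integrable \<rho> (\<lambda>x. (\<Prod>j\<in>B. X j x) * Y x powr s)" using H(1) by simp
    moreover have "(\<integral>x. (\<Prod>j\<in>B. X j x) * Y x powr s \<partial>\<rho>) = (\<integral>x. (\<Prod>j\<in>insert 0 B. Z j x powr w j) \<partial>\<rho>)"
      by (rule Bochner_Integration.integral_cong) (use eq in auto)
    ultimately show ?thesis using False H(2) eqC by simp
  qed
  then show "integrable \<rho> (\<lambda>x. (\<Prod>j\<in>B. X j x) * (if 1 - r * card B = 0 then 1 else Y x powr (1 - r * card B)))"
    and "(\<integral>x. (\<Prod>j\<in>B. X j x) * (if 1 - r * card B = 0 then 1 else Y x powr (1 - r * card B)) \<partial>\<rho>)
         \<le> (\<Prod>j\<in>B. c j powr r) * (if 1 - r * card B = 0 then 1 else c0 powr (1 - r * card B))"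
    unfolding s_def by auto
qed



lemma pw_M:
  fixes u v p :: real
  assumes "0 \<le> p"
  shows "(\<bar>u\<bar> + \<bar>v\<bar>) powr p \<le> 4 powr p * (\<bar>u\<bar> powr p + \<bar>u - v\<bar> powr p)"
proof -
  have "(\<bar>u\<bar> + \<bar>v\<bar>) powr p \<le> (2 * \<bar>u\<bar> + \<bar>u - v\<bar>) powr p" using assms by (intro powr_mono2) auto
  also have "\<dots> \<le> 2 powr p * ((2 * \<bar>u\<bar>) powr p + \<bar>u - v\<bar> powr p)" using assms by (intro powr_sum_le) auto
  also have "(2 * \<bar>u\<bar>) powr p = 2 powr p * \<bar>u\<bar> powr p" by (simp add: powr_mult)
  also have "2 powr p * (2 powr p * \<bar>u\<bar> powr p + \<bar>u - v\<bar> powr p) \<le> 2 powr p * (2 powr p * \<bar>u\<bar> powr p + 2 powr p * \<bar>u - v\<bar> powr p)"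
  proof -
    have "1 \<le> (2::real) powr p" by (rule ge_one_powr_ge_zero) (use assms in auto)
    then have "\<bar>u - v\<bar> powr p \<le> 2 powr p * \<bar>u - v\<bar> powr p"
      using mult_right_mono[of 1 "2 powr p" "\<bar>u - v\<bar> powr p"] by simp
    then show ?thesis by (intro mult_left_mono add_left_mono) auto
  qed
  also have "\<dots> = (2 powr p * 2 powr p) * (\<bar>u\<bar> powr p + \<bar>u - v\<bar> powr p)" by (simp add: algebra_simps)
  also have "2 powr p * 2 powr p = (4::real) powr p" by (simp add: powr_mult[symmetric])
  finally show ?thesis .
qed

lemma pw_D:
  fixes u v p :: real
  assumes "0 \<le> p"
  shows "\<bar>u - v\<bar> powr p \<le> 2 powr p * (\<bar>u\<bar> powr p + \<bar>v\<bar> powr p)"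
proof -
  have "\<bar>u - v\<bar> powr p \<le> (\<bar>u\<bar> + \<bar>v\<bar>) powr p" using assms by (intro powr_mono2) auto
  also have "\<dots> \<le> 2 powr p * (\<bar>u\<bar> powr p + \<bar>v\<bar> powr p)" using assms by (intro powr_sum_le) auto
  finally show ?thesis .
qed

lemma Lp_diff_integrable:
  fixes r :: real and F G :: "'a \<Rightarrow> real"
  assumes r: "0 < r" and Fm[measurable]: "F \<in> borel_measurable \<rho>" and Gm[measurable]: "G \<in> borel_measurable \<rho>"
    and Fi: "integrable \<rho> (\<lambda>x. \<bar>F x\<bar> powr (1/r))" and Gi: "integrable \<rho> (\<lambda>x. \<bar>G x\<bar> powr (1/r))"
  shows "integrable \<rho> (\<lambda>x. \<bar>F x - G x\<bar> powr (1/r))"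
proof (rule Bochner_Integration.integrable_bound)
  show "integrable \<rho> (\<lambda>x. 2 powr (1/r) * (\<bar>F x\<bar> powr (1/r) + \<bar>G x\<bar> powr (1/r)))" using Fi Gi by auto
  show "(\<lambda>x. \<bar>F x - G x\<bar> powr (1/r)) \<in> borel_measurable \<rho>" by measurable
  show "AE x in \<rho>. norm (\<bar>F x - G x\<bar> powr (1/r)) \<le> norm (2 powr (1/r) * (\<bar>F x\<bar> powr (1/r) + \<bar>G x\<bar> powr (1/r)))"
    using pw_D[of "1/r"] r by (intro AE_I2) auto
qed



lemma block_core:
  fixes r :: real and \<rho> :: "'a measure" and f g :: "'a \<Rightarrow> real" and F G :: "nat \<Rightarrow> 'a \<Rightarrow> real"
    and B :: "nat set" and m \<delta> d a :: real
  assumes r: "0 < r" "r \<le> 1"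
    and B: "finite B" "0 \<notin> B" "r * card B \<le> 1"
    and fm[measurable]: "f \<in> borel_measurable \<rho>" and gm[measurable]: "g \<in> borel_measurable \<rho>"
    and fn: "\<forall>x\<in>space \<rho>. 0 \<le> f x" and gn: "\<forall>x\<in>space \<rho>. 0 \<le> g x"
    and fi: "integrable \<rho> f" and gi: "integrable \<rho> g"
    and m: "integral\<^sup>L \<rho> f \<le> m" "0 \<le> m"
    and dl: "(\<integral>x. \<bar>f x - g x\<bar> \<partial>\<rho>) \<le> \<delta>" "0 < \<delta>"
    and Fm: "\<forall>j\<in>B. F j \<in> borel_measurable \<rho>" and Gm: "\<forall>j\<in>B. G j \<in> borel_measurable \<rho>"
    and Fi: "\<forall>j\<in>B. integrable \<rho> (\<lambda>x. \<bar>F j x\<bar> powr (1/r))"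
    and Gi: "\<forall>j\<in>B. integrable \<rho> (\<lambda>x. \<bar>G j x\<bar> powr (1/r))"
    and Fa: "\<forall>j\<in>B. (\<integral>x. \<bar>F j x\<bar> powr (1/r) \<partial>\<rho>) \<le> a"
    and Dd: "\<forall>j\<in>B. (\<integral>x. \<bar>F j x - G j x\<bar> powr (1/r) \<partial>\<rho>) \<le> d powr (1/r)"
    and d: "0 < d" "d \<le> 1" and a: "0 \<le> a"
  shows "integrable \<rho> (\<lambda>x. (\<Prod>j\<in>B. F j x) * (if 1 - r * card B = 0 then 1 else f x powr (1 - r * card B)))"
    and "integrable \<rho> (\<lambda>x. (\<Prod>j\<in>B. G j x) * (if 1 - r * card B = 0 then 1 else g x powr (1 - r * card B)))"
    and "\<bar>(\<integral>x. (\<Prod>j\<in>B. F j x) * (if 1 - r * card B = 0 then 1 else f x powr (1 - r * card B)) \<partial>\<rho>)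
          - (\<integral>x. (\<Prod>j\<in>B. G j x) * (if 1 - r * card B = 0 then 1 else g x powr (1 - r * card B)) \<partial>\<rho>)\<bar>
         \<le> card B * (d * ((4 powr (1/r) * (a + 1)) powr r) ^ (card B - 1) *
              (if 1 - r * card B = 0 then 1 else (m + 1) powr (1 - r * card B)))
           + (if 1 - r * card B = 0 then 0 else ((4 powr (1/r) * (a + 1)) powr r) ^ card B * \<delta> powr (1 - r * card B))"
proof -
  define s where "s = 1 - r * card B"
  define p where "p = 1 / r"
  define \<Lambda> where "\<Lambda> = 4 powr p * (a + 1)"
  have p0: "0 \<le> p" "1 \<le> p" unfolding p_def using r by auto
  have \<Lambda>0: "0 < \<Lambda>" unfolding \<Lambda>_def using a by auto
  have s0: "0 \<le> s" "s \<le> 1" unfolding s_def using B r by auto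
  define Ef where "Ef = (\<lambda>x. if s = 0 then 1 else f x powr s)"
  define Eg where "Eg = (\<lambda>x. if s = 0 then 1 else g x powr s)"
  have Efm[measurable]: "Ef \<in> borel_measurable \<rho>" unfolding Ef_def by (cases "s = 0") auto
  have Egm[measurable]: "Eg \<in> borel_measurable \<rho>" unfolding Eg_def by (cases "s = 0") auto
  have Efn: "0 \<le> Ef x" "0 \<le> Eg x" for x unfolding Ef_def Eg_def by auto
  have Fm': "F j \<in> borel_measurable \<rho>" "G j \<in> borel_measurable \<rho>" if "j \<in> B" for j
    using Fm Gm that by auto
  have Di: "integrable \<rho> (\<lambda>x. \<bar>F j x - G j x\<bar> powr p)" if j: "j \<in> B" for j
    unfolding p_def by (rule Lp_diff_integrable) (use r Fm' j Fi Gi in auto)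
  have Mi: "integrable \<rho> (\<lambda>x. (\<bar>F j x\<bar> + \<bar>G j x\<bar>) powr p)" and MI: "(\<integral>x. (\<bar>F j x\<bar> + \<bar>G j x\<bar>) powr p \<partial>\<rho>) \<le> \<Lambda>"
    if j: "j \<in> B" for j
  proof -
    have [measurable]: "F j \<in> borel_measurable \<rho>" "G j \<in> borel_measurable \<rho>" using Fm' j by auto
    have bi: "integrable \<rho> (\<lambda>x. 4 powr p * (\<bar>F j x\<bar> powr p + \<bar>F j x - G j x\<bar> powr p))"
      using Fi j Di[OF j] unfolding p_def by auto
    have pt: "(\<bar>F j x\<bar> + \<bar>G j x\<bar>) powr p \<le> 4 powr p * (\<bar>F j x\<bar> powr p + \<bar>F j x - G j x\<bar> powr p)" for x
      using pw_M p0 by auto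
    show I: "integrable \<rho> (\<lambda>x. (\<bar>F j x\<bar> + \<bar>G j x\<bar>) powr p)"
      by (rule Bochner_Integration.integrable_bound[OF bi]) (use pt in \<open>auto intro!: AE_I2\<close>)
    have "(\<integral>x. (\<bar>F j x\<bar> + \<bar>G j x\<bar>) powr p \<partial>\<rho>) \<le> (\<integral>x. 4 powr p * (\<bar>F j x\<bar> powr p + \<bar>F j x - G j x\<bar> powr p) \<partial>\<rho>)"
      by (rule integral_mono[OF I bi]) (use pt in auto)
    also have "\<dots> = 4 powr p * ((\<integral>x. \<bar>F j x\<bar> powr p \<partial>\<rho>) + (\<integral>x. \<bar>F j x - G j x\<bar> powr p \<partial>\<rho>))"
      using Fi j Di[OF j] unfolding p_def by auto
    also have "\<dots> \<le> 4 powr p * (a + 1)"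
    proof -
      have "d powr p \<le> 1" using d p0 by (intro powr_le1) auto
      then show ?thesis using Fa Dd j unfolding p_def by (intro mult_left_mono add_mono) force+
    qed
    finally show "(\<integral>x. (\<bar>F j x\<bar> + \<bar>G j x\<bar>) powr p \<partial>\<rho>) \<le> \<Lambda>" unfolding \<Lambda>_def .
  qed
  have GI: "(\<integral>x. \<bar>G j x\<bar> powr p \<partial>\<rho>) \<le> \<Lambda>" if j: "j \<in> B" for j
  proof -
    have "(\<integral>x. \<bar>G j x\<bar> powr p \<partial>\<rho>) \<le> (\<integral>x. (\<bar>F j x\<bar> + \<bar>G j x\<bar>) powr p \<partial>\<rho>)"
      by (rule integral_mono) (use Gi j Mi[OF j] p0 in \<open>auto simp: p_def intro: powr_mono2\<close>)
    then show ?thesis using MI[OF j] by simp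
  qed
  have gI: "integral\<^sup>L \<rho> g \<le> m + \<delta>"
  proof -
    have "integral\<^sup>L \<rho> g \<le> (\<integral>x. f x + \<bar>f x - g x\<bar> \<partial>\<rho>)"
      by (rule integral_mono) (use fi gi in auto)
    also have "\<dots> = integral\<^sup>L \<rho> f + (\<integral>x. \<bar>f x - g x\<bar> \<partial>\<rho>)" using fi gi by simp
    finally show ?thesis using m dl by simp
  qed
  have HF: "integrable \<rho> (\<lambda>x. (\<Prod>j\<in>B. \<bar>F j x\<bar>) * Ef x)"
    using holder_block(1)[of r B "\<lambda>j x. \<bar>F j x\<bar>" \<rho> "\<lambda>_. a + 1" f "m + 1"] r B Fm' Fi Fa a fn fi m
    unfolding Ef_def s_def by force
  have IF: "integrable \<rho> (\<lambda>x. (\<Prod>j\<in>B. F j x) * Ef x)"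
  proof (rule Bochner_Integration.integrable_bound[OF HF])
    show "(\<lambda>x. (\<Prod>j\<in>B. F j x) * Ef x) \<in> borel_measurable \<rho>"
      using Fm' by (intro borel_measurable_times borel_measurable_prod Efm) auto
    show "AE x in \<rho>. norm ((\<Prod>j\<in>B. F j x) * Ef x) \<le> norm ((\<Prod>j\<in>B. \<bar>F j x\<bar>) * Ef x)"
      using Efn by (intro AE_I2) (simp add: abs_mult abs_prod)
  qed
  have HG: "integrable \<rho> (\<lambda>x. (\<Prod>j\<in>B. \<bar>G j x\<bar>) * Eg x)"
    using holder_block(1)[of r B "\<lambda>j x. \<bar>G j x\<bar>" \<rho> "\<lambda>_. \<Lambda>" g "m + \<delta> + 1"] r B Fm' Gi GI \<Lambda>0 gn gi gI dl m
    unfolding Eg_def s_def p_def by force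
  have IG: "integrable \<rho> (\<lambda>x. (\<Prod>j\<in>B. G j x) * Eg x)"
  proof (rule Bochner_Integration.integrable_bound[OF HG])
    show "(\<lambda>x. (\<Prod>j\<in>B. G j x) * Eg x) \<in> borel_measurable \<rho>"
      using Fm' by (intro borel_measurable_times borel_measurable_prod Egm) auto
    show "AE x in \<rho>. norm ((\<Prod>j\<in>B. G j x) * Eg x) \<le> norm ((\<Prod>j\<in>B. \<bar>G j x\<bar>) * Eg x)"
      using Efn by (intro AE_I2) (simp add: abs_mult abs_prod)
  qed
  show "integrable \<rho> (\<lambda>x. (\<Prod>j\<in>B. F j x) * (if 1 - r * card B = 0 then 1 else f x powr (1 - r * card B)))"
    using IF unfolding Ef_def s_def .
  show "integrable \<rho> (\<lambda>x. (\<Prod>j\<in>B. G j x) * (if 1 - r * card B = 0 then 1 else g x powr (1 - r * card B)))"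
    using IG unfolding Eg_def s_def .
  define X where "X = (\<lambda>i (j::nat) x. if j = i then \<bar>F i x - G i x\<bar> else \<bar>F j x\<bar> + \<bar>G j x\<bar>)"
  define cc where "cc = (\<lambda>i j::nat. if j = i then d powr p else \<Lambda>)"
  define Em where "Em = (if s = 0 then 1 else (m + 1) powr s)"
  have T1: "integrable \<rho> (\<lambda>x. (\<Prod>j\<in>B. X i j x) * Ef x) \<and>
            (\<integral>x. (\<Prod>j\<in>B. X i j x) * Ef x \<partial>\<rho>) \<le> d * (\<Lambda> powr r) ^ (card B - 1) * Em"
    if i: "i \<in> B" for i
  proof -
    have Xm: "\<forall>j\<in>B. X i j \<in> borel_measurable \<rho>"
    proof
      fix j assume j: "j \<in> B"
      have [measurable]: "F j \<in> borel_measurable \<rho>" "G j \<in> borel_measurable \<rho>"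
        "F i \<in> borel_measurable \<rho>" "G i \<in> borel_measurable \<rho>" using Fm' i j by auto
      show "X i j \<in> borel_measurable \<rho>" unfolding X_def by (cases "j = i"; simp; measurable)
    qed
    have Xn: "\<forall>j\<in>B. \<forall>x\<in>space \<rho>. 0 \<le> X i j x" unfolding X_def by auto
    have Xi: "\<forall>j\<in>B. integrable \<rho> (\<lambda>x. X i j x powr (1/r))"
    proof
      fix j assume j: "j \<in> B"
      show "integrable \<rho> (\<lambda>x. X i j x powr (1/r))"
        by (cases "j = i") (use Di Mi i j in \<open>auto simp: X_def p_def\<close>)
    qed
    have Xc: "\<forall>j\<in>B. (\<integral>x. X i j x powr (1/r) \<partial>\<rho>) \<le> cc i j" "\<forall>j\<in>B. 0 < cc i j"
    proof -
      show "\<forall>j\<in>B. (\<integral>x. X i j x powr (1/r) \<partial>\<rho>) \<le> cc i j"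
      proof
        fix j assume j: "j \<in> B"
        show "(\<integral>x. X i j x powr (1/r) \<partial>\<rho>) \<le> cc i j"
          by (cases "j = i") (use Dd MI i j in \<open>auto simp: X_def p_def cc_def\<close>)
      qed
      show "\<forall>j\<in>B. 0 < cc i j" using \<Lambda>0 d by (auto simp: cc_def)
    qed
    note H = holder_block[of r B "X i" \<rho> "cc i" f "m + 1", OF r(1) B Xm Xn Xi Xc fm fn fi _ _]
    have H1: "integrable \<rho> (\<lambda>x. (\<Prod>j\<in>B. X i j x) * Ef x)"
      using H(1) m unfolding Ef_def s_def by auto
    have H2: "(\<integral>x. (\<Prod>j\<in>B. X i j x) * Ef x \<partial>\<rho>) \<le> (\<Prod>j\<in>B. cc i j powr r) * Em"
      using H(2) m unfolding Ef_def s_def Em_def by auto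
    have "(\<Prod>j\<in>B. cc i j powr r) = cc i i powr r * (\<Prod>j\<in>B - {i}. cc i j powr r)"
      using B i by (simp add: prod.remove)
    also have "cc i i powr r = d" unfolding cc_def p_def using d r by (simp add: powr_powr)
    also have "(\<Prod>j\<in>B - {i}. cc i j powr r) = (\<Lambda> powr r) ^ (card B - 1)"
      using B i by (simp add: cc_def prod.cong[of "B - {i}" "B - {i}" "\<lambda>j. cc i j powr r" "\<lambda>_. \<Lambda> powr r"])
    finally show ?thesis using H1 H2 by simp
  qed
  define Y where "Y = (\<lambda>x. \<bar>f x powr s - g x powr s\<bar> powr (1 / s))"
  have T2: "integrable \<rho> (\<lambda>x. (\<Prod>j\<in>B. \<bar>G j x\<bar>) * Y x powr s) \<and>
            (\<integral>x. (\<Prod>j\<in>B. \<bar>G j x\<bar>) * Y x powr s \<partial>\<rho>) \<le> (\<Lambda> powr r) ^ card B * \<delta> powr s"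
    if sp: "s \<noteq> 0"
  proof -
    have spos: "0 < s" using sp s0 by auto
    have Ym[measurable]: "Y \<in> borel_measurable \<rho>" unfolding Y_def by measurable
    have Yle: "Y x \<le> \<bar>f x - g x\<bar>" if x: "x \<in> space \<rho>" for x
    proof -
      have "\<bar>f x powr s - g x powr s\<bar> \<le> \<bar>f x - g x\<bar> powr s"
        using fn gn x spos s0 by (intro powr_diff_conc) auto
      then have "Y x \<le> (\<bar>f x - g x\<bar> powr s) powr (1 / s)"
        unfolding Y_def using spos by (intro powr_mono2) auto
      also have "\<dots> = \<bar>f x - g x\<bar>" using spos by (simp add: powr_powr)
      finally show ?thesis .
    qed
    have Yi: "integrable \<rho> Y"
      by (rule Bochner_Integration.integrable_bound[of _ "\<lambda>x. \<bar>f x - g x\<bar>"]) (use fi gi Yle in \<open>auto intro!: AE_I2 simp: Y_def\<close>)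
    have YI: "integral\<^sup>L \<rho> Y \<le> \<delta>"
    proof -
      have "integral\<^sup>L \<rho> Y \<le> (\<integral>x. \<bar>f x - g x\<bar> \<partial>\<rho>)" by (rule integral_mono) (use Yi fi gi Yle in auto)
      then show ?thesis using dl by simp
    qed
    have Yn: "\<forall>x\<in>space \<rho>. 0 \<le> Y x" unfolding Y_def by auto
    have Xm: "\<forall>j\<in>B. (\<lambda>x. \<bar>G j x\<bar>) \<in> borel_measurable \<rho>" using Fm' by auto
    have Xn: "\<forall>j\<in>B. \<forall>x\<in>space \<rho>. 0 \<le> \<bar>G j x\<bar>" by auto
    have Xi: "\<forall>j\<in>B. integrable \<rho> (\<lambda>x. \<bar>G j x\<bar> powr (1/r))" using Gi by auto
    have Xc: "\<forall>j\<in>B. (\<integral>x. \<bar>G j x\<bar> powr (1/r) \<partial>\<rho>) \<le> \<Lambda>" "\<forall>j\<in>B. 0 < \<Lambda>"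
      using GI \<Lambda>0 unfolding p_def by auto
    note H = holder_block[of r B "\<lambda>j x. \<bar>G j x\<bar>" \<rho> "\<lambda>_. \<Lambda>" Y \<delta>, OF r(1) B Xm Xn Xi Xc Ym Yn Yi YI dl(2)]
    show ?thesis using H sp unfolding s_def by auto
  qed
  define T where "T = (\<lambda>x. (\<Sum>i\<in>B. (\<Prod>j\<in>B. X i j x) * Ef x) + (if s = 0 then 0 else (\<Prod>j\<in>B. \<bar>G j x\<bar>) * Y x powr s))"
  have Ti: "integrable \<rho> T"
    unfolding T_def using T1 T2 by (cases "s = 0") auto
  have pt: "\<bar>(\<Prod>j\<in>B. F j x) * Ef x - (\<Prod>j\<in>B. G j x) * Eg x\<bar> \<le> T x" if x: "x \<in> space \<rho>" for x
  proof -
    have "(\<Prod>j\<in>B. F j x) * Ef x - (\<Prod>j\<in>B. G j x) * Eg x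
        = ((\<Prod>j\<in>B. F j x) - (\<Prod>j\<in>B. G j x)) * Ef x + (\<Prod>j\<in>B. G j x) * (Ef x - Eg x)"
      by (simp add: algebra_simps)
    then have "\<bar>(\<Prod>j\<in>B. F j x) * Ef x - (\<Prod>j\<in>B. G j x) * Eg x\<bar>
        \<le> \<bar>(\<Prod>j\<in>B. F j x) - (\<Prod>j\<in>B. G j x)\<bar> * Ef x + (\<Prod>j\<in>B. \<bar>G j x\<bar>) * \<bar>Ef x - Eg x\<bar>"
      using Efn by (simp add: abs_mult abs_prod abs_triangle_ineq[THEN order_trans])
    also have "\<bar>(\<Prod>j\<in>B. F j x) - (\<Prod>j\<in>B. G j x)\<bar> * Ef x \<le> (\<Sum>i\<in>B. (\<Prod>j\<in>B. X i j x) * Ef x)"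
    proof -
      have "\<bar>(\<Prod>j\<in>B. F j x) - (\<Prod>j\<in>B. G j x)\<bar> \<le> (\<Sum>i\<in>B. \<bar>F i x - G i x\<bar> * (\<Prod>j\<in>B - {i}. \<bar>F j x\<bar> + \<bar>G j x\<bar>))"
        by (rule prod_diff_le[OF B(1)])
      also have "\<dots> = (\<Sum>i\<in>B. (\<Prod>j\<in>B. X i j x))"
      proof (intro sum.cong refl)
        fix i assume i: "i \<in> B"
        have "(\<Prod>j\<in>B. X i j x) = X i i x * (\<Prod>j\<in>B - {i}. X i j x)" using B i by (simp add: prod.remove)
        also have "(\<Prod>j\<in>B - {i}. X i j x) = (\<Prod>j\<in>B - {i}. \<bar>F j x\<bar> + \<bar>G j x\<bar>)"
          by (intro prod.cong) (auto simp: X_def)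
        finally show "\<bar>F i x - G i x\<bar> * (\<Prod>j\<in>B - {i}. \<bar>F j x\<bar> + \<bar>G j x\<bar>) = (\<Prod>j\<in>B. X i j x)"
          by (simp add: X_def)
      qed
      finally show ?thesis using Efn by (simp add: sum_distrib_right[symmetric] mult_right_mono)
    qed
    also have "(\<Prod>j\<in>B. \<bar>G j x\<bar>) * \<bar>Ef x - Eg x\<bar> = (if s = 0 then 0 else (\<Prod>j\<in>B. \<bar>G j x\<bar>) * Y x powr s)"
    proof (cases "s = 0")
      case True then show ?thesis by (simp add: Ef_def Eg_def)
    next
      case False
      then have "0 < s" using s0 by auto
      then show ?thesis using False by (simp add: Ef_def Eg_def Y_def powr_powr)
    qed
    finally show ?thesis unfolding T_def by simp
  qed
  have "\<bar>(\<integral>x. (\<Prod>j\<in>B. F j x) * Ef x \<partial>\<rho>) - (\<integral>x. (\<Prod>j\<in>B. G j x) * Eg x \<partial>\<rho>)\<bar>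
      = \<bar>\<integral>x. (\<Prod>j\<in>B. F j x) * Ef x - (\<Prod>j\<in>B. G j x) * Eg x \<partial>\<rho>\<bar>"
    using IF IG by simp
  also have "\<dots> \<le> (\<integral>x. \<bar>(\<Prod>j\<in>B. F j x) * Ef x - (\<Prod>j\<in>B. G j x) * Eg x\<bar> \<partial>\<rho>)"
    by (rule integral_abs_bound)
  also have "\<dots> \<le> integral\<^sup>L \<rho> T"
    by (rule integral_mono) (use IF IG Ti pt in auto)
  also have "integral\<^sup>L \<rho> T = (\<Sum>i\<in>B. (\<integral>x. (\<Prod>j\<in>B. X i j x) * Ef x \<partial>\<rho>))
      + (if s = 0 then 0 else (\<integral>x. (\<Prod>j\<in>B. \<bar>G j x\<bar>) * Y x powr s \<partial>\<rho>))"
    unfolding T_def using T1 T2 by (cases "s = 0") (auto simp: integral_sum)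
  also have "\<dots> \<le> (\<Sum>i\<in>B. d * (\<Lambda> powr r) ^ (card B - 1) * Em)
      + (if s = 0 then 0 else (\<Lambda> powr r) ^ card B * \<delta> powr s)"
    using T1 T2 by (intro add_mono sum_mono) auto
  finally show "\<bar>(\<integral>x. (\<Prod>j\<in>B. F j x) * (if 1 - r * card B = 0 then 1 else f x powr (1 - r * card B)) \<partial>\<rho>)
          - (\<integral>x. (\<Prod>j\<in>B. G j x) * (if 1 - r * card B = 0 then 1 else g x powr (1 - r * card B)) \<partial>\<rho>)\<bar>
         \<le> card B * (d * ((4 powr (1/r) * (a + 1)) powr r) ^ (card B - 1) *
              (if 1 - r * card B = 0 then 1 else (m + 1) powr (1 - r * card B)))
           + (if 1 - r * card B = 0 then 0 else ((4 powr (1/r) * (a + 1)) powr r) ^ card B * \<delta> powr (1 - r * card B))"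
    unfolding Ef_def Eg_def Em_def s_def \<Lambda>_def p_def by simp
qed



lemma dom_sum_props:
  assumes S: "sets \<mu> = sets \<Omega>" "sets \<nu> = sets \<Omega>" and fin: "finite_measure \<mu>" "finite_measure \<nu>"
  shows "sets (dom_sum \<mu> \<nu>) = sets \<Omega>" "space (dom_sum \<mu> \<nu>) = space \<Omega>"
    and "\<And>A. A \<in> sets \<Omega> \<Longrightarrow> emeasure (dom_sum \<mu> \<nu>) A = emeasure \<mu> A + emeasure \<nu> A"
    and "finite_measure (dom_sum \<mu> \<nu>)"
proof -
  have sa: "sigma_algebra (space \<mu>) (sets \<mu>)" by (rule sets.sigma_algebra_axioms)
  have sp: "space \<mu> = space \<Omega>" "space \<nu> = space \<Omega>" using sets_eq_imp_space_eq[OF S(1)] sets_eq_imp_space_eq[OF S(2)] by auto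
  show ss: "sets (dom_sum \<mu> \<nu>) = sets \<Omega>" unfolding dom_sum_def using S sa by (simp add: sigma_algebra.sets_measure_of_eq)
  then show "space (dom_sum \<mu> \<nu>) = space \<Omega>" by (rule sets_eq_imp_space_eq)
  have pos: "positive (sets \<mu>) (\<lambda>A. emeasure \<mu> A + emeasure \<nu> A)" by (simp add: positive_def)
  have ca: "countably_additive (sets \<mu>) (\<lambda>A. emeasure \<mu> A + emeasure \<nu> A)"
    unfolding countably_additive_def
  proof (intro allI impI)
    fix A :: "nat \<Rightarrow> _" assume A: "range A \<subseteq> sets \<mu>" "disjoint_family A" "\<Union> (range A) \<in> sets \<mu>"
    have A': "range A \<subseteq> sets \<nu>" using A S by auto
    have "(\<Sum>i. emeasure \<mu> (A i) + emeasure \<nu> (A i)) = (\<Sum>i. emeasure \<mu> (A i)) + (\<Sum>i. emeasure \<nu> (A i))"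
      by (rule suminf_add[symmetric]) (auto intro: summableI)
    also have "\<dots> = emeasure \<mu> (\<Union> (range A)) + emeasure \<nu> (\<Union> (range A))"
      using A A' by (simp add: suminf_emeasure)
    finally show "(\<Sum>i. emeasure \<mu> (A i) + emeasure \<nu> (A i)) = emeasure \<mu> (\<Union> (range A)) + emeasure \<nu> (\<Union> (range A))" .
  qed
  show em: "\<And>A. A \<in> sets \<Omega> \<Longrightarrow> emeasure (dom_sum \<mu> \<nu>) A = emeasure \<mu> A + emeasure \<nu> A"
    unfolding dom_sum_def using S by (intro emeasure_measure_of_sigma[OF sa pos ca]) auto
  show "finite_measure (dom_sum \<mu> \<nu>)"
  proof (rule finite_measureI)
    have "emeasure (dom_sum \<mu> \<nu>) (space (dom_sum \<mu> \<nu>)) = emeasure \<mu> (space \<Omega>) + emeasure \<nu> (space \<Omega>)"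
      using em[of "space \<Omega>"] ss by (simp add: \<open>space (dom_sum \<mu> \<nu>) = space \<Omega>\<close>)
    also have "\<dots> \<noteq> \<infinity>" using fin sp by (simp add: finite_measure.emeasure_finite)
    finally show "emeasure (dom_sum \<mu> \<nu>) (space (dom_sum \<mu> \<nu>)) \<noteq> \<infinity>" .
  qed
qed

lemma dom_sum_comm:
  assumes "sets \<mu> = sets \<nu>"
  shows "dom_sum \<mu> \<nu> = dom_sum \<nu> \<mu>"
  using assms sets_eq_imp_space_eq[OF assms] unfolding dom_sum_def by (simp add: add.commute)

lemma frame_density:
  assumes S: "sets \<mu> = sets \<Omega>" "sets \<nu> = sets \<Omega>" and fin: "finite_measure \<mu>" "finite_measure \<nu>"
  defines "\<rho> \<equiv> dom_sum \<mu> \<nu>"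
  defines "f \<equiv> (\<lambda>x. enn2real (RN_deriv \<rho> \<mu> x))"
  shows "f \<in> borel_measurable \<rho>" "\<And>x. 0 \<le> f x"
    and "density \<rho> (\<lambda>x. ennreal (f x)) = \<mu>"
    and "\<And>h. h \<in> borel_measurable \<Omega> \<Longrightarrow> integrable \<mu> h \<longleftrightarrow> integrable \<rho> (\<lambda>x. f x * h x)"
    and "\<And>h. h \<in> borel_measurable \<Omega> \<Longrightarrow> integral\<^sup>L \<mu> h = (\<integral>x. f x * h x \<partial>\<rho>)"
proof -
  note D = dom_sum_props[OF S fin]
  have sr: "sets \<rho> = sets \<Omega>" using D unfolding \<rho>_def by simp
  interpret \<rho>: finite_measure \<rho> using D unfolding \<rho>_def by simp
  have ac: "absolutely_continuous \<rho> \<mu>"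
    unfolding absolutely_continuous_def
  proof
    fix A assume "A \<in> null_sets \<rho>"
    then have A: "A \<in> sets \<Omega>" "emeasure \<rho> A = 0" using sr by auto
    then have "emeasure \<mu> A = 0" using D(3)[OF A(1)] unfolding \<rho>_def by simp
    then show "A \<in> null_sets \<mu>" using A S by auto
  qed
  have sm: "sets \<mu> = sets \<rho>" using S sr by simp
  have dens: "density \<rho> (RN_deriv \<rho> \<mu>) = \<mu>" by (rule \<rho>.density_RN_deriv[OF ac sm])
  have fin_ae: "AE x in \<rho>. RN_deriv \<rho> \<mu> x \<noteq> \<infinity>"
    by (rule \<rho>.RN_deriv_finite[OF _ ac sm]) (use fin in \<open>auto intro: finite_measure.sigma_finite_measure\<close>)
  show fm: "f \<in> borel_measurable \<rho>" unfolding f_def by measurable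
  show fn: "\<And>x. 0 \<le> f x" unfolding f_def by simp
  show de: "density \<rho> (\<lambda>x. ennreal (f x)) = \<mu>"
  proof -
    have "density \<rho> (\<lambda>x. ennreal (f x)) = density \<rho> (RN_deriv \<rho> \<mu>)"
    proof (rule density_cong)
      show "(\<lambda>x. ennreal (f x)) \<in> borel_measurable \<rho>" using fm by simp
      show "RN_deriv \<rho> \<mu> \<in> borel_measurable \<rho>" by simp
      show "AE x in \<rho>. ennreal (f x) = RN_deriv \<rho> \<mu> x"
        using fin_ae
      proof eventually_elim
        case (elim x) then show ?case by (simp add: f_def ennreal_enn2real_if)
      qed
    qed
    then show ?thesis using dens by simp
  qed
  fix h :: "_ \<Rightarrow> real" assume hm: "h \<in> borel_measurable \<Omega>"
  then have hm': "h \<in> borel_measurable \<rho>" by (subst measurable_cong_sets[OF sr refl])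
  have "integrable (density \<rho> (\<lambda>x. ennreal (f x))) h \<longleftrightarrow> integrable \<rho> (\<lambda>x. f x *\<^sub>R h x)"
    by (rule integrable_density[OF hm' fm]) (simp add: fn)
  then show "integrable \<mu> h \<longleftrightarrow> integrable \<rho> (\<lambda>x. f x * h x)" unfolding de by simp
  have "integral\<^sup>L (density \<rho> (\<lambda>x. ennreal (f x))) h = (\<integral>x. f x *\<^sub>R h x \<partial>\<rho>)"
    by (rule integral_density[OF hm' fm]) (simp add: fn)
  then show "integral\<^sup>L \<mu> h = (\<integral>x. f x * h x \<partial>\<rho>)" unfolding de by simp
qed



lemma Mr_point_D:
  assumes "Mr_point \<Omega> \<mu>"
  shows "sets \<mu> = sets \<Omega>" "finite_measure \<mu>" "space \<mu> = space \<Omega>" "space \<mu> \<noteq> {}"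
  using assms sets_eq_imp_space_eq[of \<mu> \<Omega>] unfolding Mr_point_def by auto

lemma Lr_dens_meas:
  assumes "Lr_dens r \<mu> \<phi>" "sets \<mu> = sets \<Omega>"
  shows "\<phi> \<in> borel_measurable \<Omega>"
  using assms unfolding Lr_dens_def using measurable_cong_sets[OF assms(2) refl] by auto

lemma frame_one:
  fixes r :: real
  assumes r: "0 < r" and S: "sets \<mu> = sets \<Omega>" "sets \<nu> = sets \<Omega>" and fin: "finite_measure \<mu>" "finite_measure \<nu>"
  defines "\<rho> \<equiv> dom_sum \<mu> \<nu>"
  defines "f \<equiv> (\<lambda>x. enn2real (RN_deriv \<rho> \<mu> x))"
  shows "f \<in> borel_measurable \<rho>" "\<And>x. 0 \<le> f x" "integrable \<rho> f"
    and "measure \<mu> (space \<mu>) = integral\<^sup>L \<rho> f"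
    and "\<And>h. h \<in> borel_measurable \<Omega> \<Longrightarrow> integral\<^sup>L \<mu> h = (\<integral>x. f x * h x \<partial>\<rho>)"
    and "\<And>\<phi>. Lr_dens r \<mu> \<phi> \<Longrightarrow> (\<lambda>x. \<phi> x * f x powr r) \<in> borel_measurable \<rho> \<and>
           integrable \<rho> (\<lambda>x. \<bar>\<phi> x * f x powr r\<bar> powr (1/r)) \<and>
           (\<integral>x. \<bar>\<phi> x * f x powr r\<bar> powr (1/r) \<partial>\<rho>) = (\<integral>x. \<bar>\<phi> x\<bar> powr (1/r) \<partial>\<mu>)"
proof -
  note FD = frame_density[OF S fin, folded \<rho>_def]
  note D = dom_sum_props[OF S fin, folded \<rho>_def]
  have sr: "sets \<rho> = sets \<Omega>" using D by simp
  show fm: "f \<in> borel_measurable \<rho>" unfolding f_def by measurable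
  show fn: "\<And>x. 0 \<le> f x" unfolding f_def by simp
  interpret \<mu>: finite_measure \<mu> by fact
  have "integrable \<mu> (\<lambda>_. 1::real)" by simp
  then show fi: "integrable \<rho> f" using FD(4)[of "\<lambda>_. 1"] unfolding f_def by simp
  have "measure \<mu> (space \<mu>) = integral\<^sup>L \<mu> (\<lambda>_. 1::real)" by simp
  also have "\<dots> = integral\<^sup>L \<rho> f" using FD(5)[of "\<lambda>_. 1"] unfolding f_def by simp
  finally show "measure \<mu> (space \<mu>) = integral\<^sup>L \<rho> f" .
  show "\<And>h. h \<in> borel_measurable \<Omega> \<Longrightarrow> integral\<^sup>L \<mu> h = (\<integral>x. f x * h x \<partial>\<rho>)" using FD(5) unfolding f_def by blast
  fix \<phi> assume L: "Lr_dens r \<mu> \<phi>"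
  have pm: "\<phi> \<in> borel_measurable \<Omega>" by (rule Lr_dens_meas[OF L S(1)])
  then have pm'[measurable]: "\<phi> \<in> borel_measurable \<rho>" by (subst measurable_cong_sets[OF sr refl])
  have pt: "\<bar>\<phi> x * f x powr r\<bar> powr (1/r) = f x * \<bar>\<phi> x\<bar> powr (1/r)" for x
    using fn[of x] r by (simp add: abs_mult powr_mult powr_powr)
  have hm: "(\<lambda>x. \<bar>\<phi> x\<bar> powr (1/r)) \<in> borel_measurable \<Omega>" using pm by measurable
  have I: "integrable \<mu> (\<lambda>x. \<bar>\<phi> x\<bar> powr (1/r))" using L unfolding Lr_dens_def by simp
  show "(\<lambda>x. \<phi> x * f x powr r) \<in> borel_measurable \<rho> \<and>
           integrable \<rho> (\<lambda>x. \<bar>\<phi> x * f x powr r\<bar> powr (1/r)) \<and>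
           (\<integral>x. \<bar>\<phi> x * f x powr r\<bar> powr (1/r) \<partial>\<rho>) = (\<integral>x. \<bar>\<phi> x\<bar> powr (1/r) \<partial>\<mu>)"
    using fm FD(4)[OF hm] FD(5)[OF hm] I unfolding pt unfolding f_def by simp
qed

lemma frame_all:
  fixes r :: real
  assumes r: "0 < r" and M: "Mr_point \<Omega> \<mu>" "Mr_point \<Omega> \<nu>"
    and \<rho>_def: "\<rho> = dom_sum \<mu> \<nu>"
    and f_def: "f = (\<lambda>x. enn2real (RN_deriv \<rho> \<mu> x))"
    and g_def: "g = (\<lambda>x. enn2real (RN_deriv \<rho> \<nu> x))"
  shows "sets \<rho> = sets \<Omega>"
    and "f \<in> borel_measurable \<rho>" "\<forall>x\<in>space \<rho>. 0 \<le> f x" "integrable \<rho> f"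
    and "g \<in> borel_measurable \<rho>" "\<forall>x\<in>space \<rho>. 0 \<le> g x" "integrable \<rho> g"
    and "measure \<mu> (space \<mu>) = integral\<^sup>L \<rho> f" "measure \<nu> (space \<nu>) = integral\<^sup>L \<rho> g"
    and "\<And>h. h \<in> borel_measurable \<Omega> \<Longrightarrow> integral\<^sup>L \<mu> h = (\<integral>x. f x * h x \<partial>\<rho>)"
    and "\<And>h. h \<in> borel_measurable \<Omega> \<Longrightarrow> integral\<^sup>L \<nu> h = (\<integral>x. g x * h x \<partial>\<rho>)"
    and "\<And>\<phi>. Lr_dens r \<mu> \<phi> \<Longrightarrow> (\<lambda>x. \<phi> x * f x powr r) \<in> borel_measurable \<rho> \<and>
           integrable \<rho> (\<lambda>x. \<bar>\<phi> x * f x powr r\<bar> powr (1/r)) \<and>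
           (\<integral>x. \<bar>\<phi> x * f x powr r\<bar> powr (1/r) \<partial>\<rho>) = (\<integral>x. \<bar>\<phi> x\<bar> powr (1/r) \<partial>\<mu>)"
    and "\<And>\<phi>. Lr_dens r \<nu> \<phi> \<Longrightarrow> (\<lambda>x. \<phi> x * g x powr r) \<in> borel_measurable \<rho> \<and>
           integrable \<rho> (\<lambda>x. \<bar>\<phi> x * g x powr r\<bar> powr (1/r)) \<and>
           (\<integral>x. \<bar>\<phi> x * g x powr r\<bar> powr (1/r) \<partial>\<rho>) = (\<integral>x. \<bar>\<phi> x\<bar> powr (1/r) \<partial>\<nu>)"
    and "\<And>\<phi> \<psi>. Sr_dist r \<mu> \<phi> \<nu> \<psi> = (\<integral>x. \<bar>\<phi> x * f x powr r - \<psi> x * g x powr r\<bar> powr (1/r) \<partial>\<rho>) powr r"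
proof -
  note Mu = Mr_point_D[OF M(1)] and Nu = Mr_point_D[OF M(2)]
  have comm: "dom_sum \<nu> \<mu> = \<rho>" unfolding \<rho>_def by (rule dom_sum_comm) (use Mu Nu in simp)
  note A = frame_one[OF r Mu(1) Nu(1) Mu(2) Nu(2), folded \<rho>_def]
  note B = frame_one[OF r Nu(1) Mu(1) Nu(2) Mu(2), unfolded comm]
  show "sets \<rho> = sets \<Omega>" using dom_sum_props[OF Mu(1) Nu(1) Mu(2) Nu(2)] unfolding \<rho>_def by simp
  show "f \<in> borel_measurable \<rho>" "\<forall>x\<in>space \<rho>. 0 \<le> f x" "integrable \<rho> f"
    "g \<in> borel_measurable \<rho>" "\<forall>x\<in>space \<rho>. 0 \<le> g x" "integrable \<rho> g"
    "measure \<mu> (space \<mu>) = integral\<^sup>L \<rho> f" "measure \<nu> (space \<nu>) = integral\<^sup>L \<rho> g"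
    using A B unfolding f_def g_def by auto
  show "\<And>h. h \<in> borel_measurable \<Omega> \<Longrightarrow> integral\<^sup>L \<mu> h = (\<integral>x. f x * h x \<partial>\<rho>)" using A unfolding f_def by blast
  show "\<And>h. h \<in> borel_measurable \<Omega> \<Longrightarrow> integral\<^sup>L \<nu> h = (\<integral>x. g x * h x \<partial>\<rho>)" using B unfolding g_def by blast
  show "\<And>\<phi>. Lr_dens r \<mu> \<phi> \<Longrightarrow> (\<lambda>x. \<phi> x * f x powr r) \<in> borel_measurable \<rho> \<and>
           integrable \<rho> (\<lambda>x. \<bar>\<phi> x * f x powr r\<bar> powr (1/r)) \<and>
           (\<integral>x. \<bar>\<phi> x * f x powr r\<bar> powr (1/r) \<partial>\<rho>) = (\<integral>x. \<bar>\<phi> x\<bar> powr (1/r) \<partial>\<mu>)" using A unfolding f_def by blast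
  show "\<And>\<phi>. Lr_dens r \<nu> \<phi> \<Longrightarrow> (\<lambda>x. \<phi> x * g x powr r) \<in> borel_measurable \<rho> \<and>
           integrable \<rho> (\<lambda>x. \<bar>\<phi> x * g x powr r\<bar> powr (1/r)) \<and>
           (\<integral>x. \<bar>\<phi> x * g x powr r\<bar> powr (1/r) \<partial>\<rho>) = (\<integral>x. \<bar>\<phi> x\<bar> powr (1/r) \<partial>\<nu>)" using B unfolding g_def by blast
  show "\<And>\<phi> \<psi>. Sr_dist r \<mu> \<phi> \<nu> \<psi> = (\<integral>x. \<bar>\<phi> x * f x powr r - \<psi> x * g x powr r\<bar> powr (1/r) \<partial>\<rho>) powr r"
    unfolding Sr_dist_def Let_def \<rho>_def f_def g_def by simp
qed

lemma Sr_small: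
  fixes r x d :: real
  assumes "0 < r" "0 \<le> x" "x powr r < d"
  shows "x \<le> d powr (1/r)"
proof -
  have "x = (x powr r) powr (1/r)" using assms by (simp add: powr_powr)
  also have "\<dots> \<le> d powr (1/r)" using assms by (intro powr_mono2) auto
  finally show ?thesis .
qed



lemma prod_dens_eq:
  fixes r x :: real and v :: "nat \<Rightarrow> real"
  assumes B: "finite B" "B \<noteq> {}" and x: "0 \<le> x" and r: "0 < r" "r * card B \<le> 1"
  shows "x * (\<Prod>j\<in>B. v j) = (\<Prod>j\<in>B. v j * x powr r) * (if 1 - r * card B = 0 then 1 else x powr (1 - r * card B))"
proof -
  have k: "card B \<noteq> 0" using B by simp
  have "(\<Prod>j\<in>B. v j * x powr r) = (\<Prod>j\<in>B. v j) * (x powr r) ^ card B"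
    by (simp add: prod.distrib)
  show ?thesis
  proof (cases "x = 0")
    case True then show ?thesis using k by (simp add: prod.distrib)
  next
    case False
    then have xp: "0 < x" using x by simp
    have pw: "(x powr r) ^ card B = x powr (r * card B)" using xp powr_power[of x r "card B"] by (simp add: mult.commute)
    have e: "x powr (r * card B) * (if 1 - r * card B = 0 then 1 else x powr (1 - r * card B)) = x"
    proof (cases "1 - r * card B = 0")
      case True then have "r * card B = 1" by simp
      then show ?thesis using xp by simp
    next
      case False
      have "x powr (r * card B) * x powr (1 - r * card B) = x powr (r * card B + (1 - r * card B))"
        by (simp add: powr_add[symmetric])
      then show ?thesis using False xp by simp
    qed
    have "(\<Prod>j\<in>B. v j * x powr r) * (if 1 - r * card B = 0 then 1 else x powr (1 - r * card B))
        = (\<Prod>j\<in>B. v j) * (x powr (r * card B) * (if 1 - r * card B = 0 then 1 else x powr (1 - r * card B)))"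
      by (simp add: prod.distrib pw)
    also have "\<dots> = (\<Prod>j\<in>B. v j) * x" using e by simp
    finally show ?thesis by simp
  qed
qed

lemma mass_cont:
  fixes r :: real
  assumes r: "0 < r" "r \<le> 1" and M: "Mr_point \<Omega> \<mu>"
  defines "K \<equiv> (1/r) * (4 powr (1/r) * (measure \<mu> (space \<mu>) + 1)) powr (1 - r)"
  shows "0 < K"
    and "\<And>\<nu> d. Mr_point \<Omega> \<nu> \<Longrightarrow> 0 < d \<Longrightarrow> d \<le> 1 \<Longrightarrow> Sr_dist r \<mu> (\<lambda>_. 1) \<nu> (\<lambda>_. 1) < d \<Longrightarrow>
       (\<integral>x. \<bar>enn2real (RN_deriv (dom_sum \<mu> \<nu>) \<mu> x) - enn2real (RN_deriv (dom_sum \<mu> \<nu>) \<nu> x)\<bar> \<partial>dom_sum \<mu> \<nu>) \<le> K * d"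
    and "\<And>\<nu> d. Mr_point \<Omega> \<nu> \<Longrightarrow> 0 < d \<Longrightarrow> d \<le> 1 \<Longrightarrow> Sr_dist r \<mu> (\<lambda>_. 1) \<nu> (\<lambda>_. 1) < d \<Longrightarrow>
       \<bar>measure \<nu> (space \<nu>) - measure \<mu> (space \<mu>)\<bar> \<le> K * d"
proof -
  have m0: "0 \<le> measure \<mu> (space \<mu>)" by simp
  have m1: "0 < measure \<mu> (space \<mu>) + 1" using m0 by linarith
  show "0 < K" unfolding K_def using r m1 by (intro mult_pos_pos) auto
  fix \<nu> and d :: real
  assume N: "Mr_point \<Omega> \<nu>" and d: "0 < d" "d \<le> 1" and S: "Sr_dist r \<mu> (\<lambda>_. 1) \<nu> (\<lambda>_. 1) < d"
  define \<rho> where "\<rho> = dom_sum \<mu> \<nu>"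
  define f where "f = (\<lambda>x. enn2real (RN_deriv \<rho> \<mu> x))"
  define g where "g = (\<lambda>x. enn2real (RN_deriv \<rho> \<nu> x))"
  note FA = frame_all[OF r(1) M N \<rho>_def f_def g_def]
  have sd: "(\<integral>x. \<bar>f x powr r - g x powr r\<bar> powr (1/r) \<partial>\<rho>) \<le> d powr (1/r)"
    by (rule Sr_small[OF r(1)]) (use S FA(14)[of "\<lambda>_. 1" "\<lambda>_. 1"] in auto)
  have di: "integrable \<rho> (\<lambda>x. \<bar>f x powr r - g x powr r\<bar> powr (1/r))"
  proof -
    have L: "Lr_dens r \<mu> (\<lambda>_. 1)" "Lr_dens r \<nu> (\<lambda>_. 1)"
      using Mr_point_D[OF M] Mr_point_D[OF N] unfolding Lr_dens_def
      by (auto intro: finite_measure.integrable_const)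
    show ?thesis using Lp_diff_integrable[OF r(1), of "\<lambda>x. 1 * f x powr r" \<rho> "\<lambda>x. 1 * g x powr r"]
      FA(12)[OF L(1)] FA(13)[OF L(2)] by simp
  qed
  have mc: "(\<integral>x. \<bar>f x - g x\<bar> \<partial>\<rho>) \<le> (1/r) * d * (4 powr (1/r) * (measure \<mu> (space \<mu>) + 1)) powr (1 - r)"
    by (rule mass_core[OF r FA(2) FA(5) FA(3) FA(6) FA(4) FA(7) di sd d]) (use FA(8) m0 in auto)
  then show "(\<integral>x. \<bar>enn2real (RN_deriv (dom_sum \<mu> \<nu>) \<mu> x) - enn2real (RN_deriv (dom_sum \<mu> \<nu>) \<nu> x)\<bar> \<partial>dom_sum \<mu> \<nu>) \<le> K * d"
    unfolding K_def f_def g_def \<rho>_def by (simp add: algebra_simps)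
  have "\<bar>measure \<nu> (space \<nu>) - measure \<mu> (space \<mu>)\<bar> = \<bar>\<integral>x. g x - f x \<partial>\<rho>\<bar>"
    using FA(8,9) FA(4,7) by simp
  also have "\<dots> \<le> (\<integral>x. \<bar>f x - g x\<bar> \<partial>\<rho>)"
    using integral_abs_bound[of \<rho> "\<lambda>x. g x - f x"] by (simp add: abs_minus_commute)
  also have "\<dots> \<le> K * d" using mc unfolding K_def by (simp add: algebra_simps)
  finally show "\<bar>measure \<nu> (space \<nu>) - measure \<mu> (space \<mu>)\<bar> \<le> K * d" .
qed



lemma block_cont:
  fixes r e :: real and V :: "nat \<Rightarrow> 'a \<Rightarrow> real" and B :: "nat set"
  assumes r: "0 < r" "r \<le> 1" and M: "Mr_point \<Omega> \<mu>"
    and B: "finite B" "B \<noteq> {}" "0 \<notin> B" "r * card B \<le> 1"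
    and VL: "\<forall>j\<in>B. Lr_dens r \<mu> (V j)"
    and e: "0 < e"
  shows "\<exists>d>0. \<forall>\<nu> W. Mr_point \<Omega> \<nu> \<and> (\<forall>j\<in>B. Lr_dens r \<nu> (W j)) \<and> Sr_dist r \<mu> (\<lambda>_. 1) \<nu> (\<lambda>_. 1) < d
        \<and> (\<forall>j\<in>B. Sr_dist r \<mu> (V j) \<nu> (W j) < d)
        \<longrightarrow> \<bar>(\<integral>x. (\<Prod>j\<in>B. W j x) \<partial>\<nu>) - (\<integral>x. (\<Prod>j\<in>B. V j x) \<partial>\<mu>)\<bar> < e"
proof -
  define K where "K = (1/r) * (4 powr (1/r) * (measure \<mu> (space \<mu>) + 1)) powr (1 - r)"
  note MC = mass_cont[OF r M, folded K_def]
  define m where "m = measure \<mu> (space \<mu>)"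
  have m0: "0 \<le> m" unfolding m_def by simp
  define a where "a = (\<Sum>j\<in>B. (\<integral>x. \<bar>V j x\<bar> powr (1/r) \<partial>\<mu>))"
  have aj: "(\<integral>x. \<bar>V j x\<bar> powr (1/r) \<partial>\<mu>) \<le> a" if "j \<in> B" for j
    unfolding a_def by (rule member_le_sum) (use that B in auto)
  have a0: "0 \<le> a" unfolding a_def by (intro sum_nonneg) auto
  define s where "s = 1 - r * card B"
  define L where "L = (4 powr (1/r) * (a + 1)) powr r"
  define Em where "Em = (if s = 0 then 1 else (m + 1) powr s)"
  define bound where "bound = (\<lambda>d. card B * (d * L ^ (card B - 1) * Em) + (if s = 0 then 0 else L ^ card B * (K * d) powr s))"
  have lim: "(bound \<longlongrightarrow> 0) (at_right 0)"
  proof -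
    have id: "((\<lambda>d::real. d) \<longlongrightarrow> 0) (at_right 0)" by (rule tendsto_ident_at)
    have t1: "((\<lambda>d. card B * (d * L ^ (card B - 1) * Em)) \<longlongrightarrow> 0) (at_right 0)"
      by (intro tendsto_mult_left_zero tendsto_mult_right_zero id)
    have t2: "((\<lambda>d. (if s = 0 then 0 else L ^ card B * (K * d) powr s)) \<longlongrightarrow> 0) (at_right 0)"
    proof (cases "s = 0")
      case True then show ?thesis by simp
    next
      case False
      then have sp: "0 < s" unfolding s_def using B by simp
      have "((\<lambda>d. (K * d) powr s) \<longlongrightarrow> 0) (at_right 0)"
      proof (rule tendsto_zero_powrI)
        show "((\<lambda>d. K * d) \<longlongrightarrow> 0) (at_right 0)" using tendsto_mult_right_zero[OF id, of K] by simp
        show "((\<lambda>d. s) \<longlongrightarrow> s) (at_right 0)" by simp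
        show "\<forall>\<^sub>F x in at_right 0. 0 \<le> K * x" using MC(1) by (auto simp: eventually_at_right_field)
      qed (use sp in auto)
      then show ?thesis using False tendsto_mult_right_zero[of "\<lambda>d. (K * d) powr s" "at_right 0" "L ^ card B"] by simp
    qed
    show ?thesis unfolding bound_def using tendsto_add[OF t1 t2] by simp
  qed
  have "eventually (\<lambda>d. bound d < e) (at_right 0)" by (rule order_tendstoD(2)[OF lim e])
  then obtain b where b: "b > 0" "\<And>y. y > 0 \<Longrightarrow> y < b \<Longrightarrow> bound y < e"
    unfolding eventually_at_right_field by auto
  define d where "d = min (b / 2) 1"
  have d: "0 < d" "d \<le> 1" "d < b" unfolding d_def using b by auto
  show ?thesis
  proof (intro exI[of _ d] conjI allI impI)
    show "0 < d" by fact
    fix \<nu> W assume H: "Mr_point \<Omega> \<nu> \<and> (\<forall>j\<in>B. Lr_dens r \<nu> (W j)) \<and> Sr_dist r \<mu> (\<lambda>_. 1) \<nu> (\<lambda>_. 1) < d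
        \<and> (\<forall>j\<in>B. Sr_dist r \<mu> (V j) \<nu> (W j) < d)"
    then have N: "Mr_point \<Omega> \<nu>" and WL: "\<forall>j\<in>B. Lr_dens r \<nu> (W j)"
      and S1: "Sr_dist r \<mu> (\<lambda>_. 1) \<nu> (\<lambda>_. 1) < d" and SV: "\<forall>j\<in>B. Sr_dist r \<mu> (V j) \<nu> (W j) < d" by auto
    define \<rho> where "\<rho> = dom_sum \<mu> \<nu>"
    define f where "f = (\<lambda>x. enn2real (RN_deriv \<rho> \<mu> x))"
    define g where "g = (\<lambda>x. enn2real (RN_deriv \<rho> \<nu> x))"
    note FA = frame_all[OF r(1) M N \<rho>_def f_def g_def]
    have dl: "(\<integral>x. \<bar>f x - g x\<bar> \<partial>\<rho>) \<le> K * d"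
      using MC(2)[OF N d(1) d(2) S1] unfolding f_def g_def \<rho>_def .
    define F where "F = (\<lambda>j x. V j x * f x powr r)"
    define G where "G = (\<lambda>j x. W j x * g x powr r)"
    have Fprops: "\<forall>j\<in>B. F j \<in> borel_measurable \<rho>" "\<forall>j\<in>B. integrable \<rho> (\<lambda>x. \<bar>F j x\<bar> powr (1/r))"
      "\<forall>j\<in>B. (\<integral>x. \<bar>F j x\<bar> powr (1/r) \<partial>\<rho>) \<le> a"
      using FA(12) VL aj unfolding F_def by auto
    have Gprops: "\<forall>j\<in>B. G j \<in> borel_measurable \<rho>" "\<forall>j\<in>B. integrable \<rho> (\<lambda>x. \<bar>G j x\<bar> powr (1/r))"
      using FA(13) WL unfolding G_def by auto
    have Dd: "\<forall>j\<in>B. (\<integral>x. \<bar>F j x - G j x\<bar> powr (1/r) \<partial>\<rho>) \<le> d powr (1/r)"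
    proof
      fix j assume j: "j \<in> B"
      show "(\<integral>x. \<bar>F j x - G j x\<bar> powr (1/r) \<partial>\<rho>) \<le> d powr (1/r)"
        by (rule Sr_small[OF r(1)]) (use SV j FA(14)[of "V j" "W j"] in \<open>auto simp: F_def G_def\<close>)
    qed
    have Kd: "0 < K * d" using MC(1) d by simp
    note BC = block_core[OF r B(1) B(3) B(4) FA(2) FA(5) FA(3) FA(6) FA(4) FA(7) _ m0 dl Kd
        Fprops(1) Gprops(1) Fprops(2) Gprops(2) Fprops(3) Dd d(1) d(2) a0]
    have fm: "integral\<^sup>L \<rho> f \<le> m" using FA(8) unfolding m_def by simp
    have Vm: "(\<lambda>x. \<Prod>j\<in>B. V j x) \<in> borel_measurable \<Omega>"
      using VL Lr_dens_meas[of r \<mu> _ \<Omega>] Mr_point_D[OF M] by (intro borel_measurable_prod) auto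
    have Wm: "(\<lambda>x. \<Prod>j\<in>B. W j x) \<in> borel_measurable \<Omega>"
      using WL Lr_dens_meas[of r \<nu> _ \<Omega>] Mr_point_D[OF N] by (intro borel_measurable_prod) auto
    have eqV: "(\<integral>x. (\<Prod>j\<in>B. V j x) \<partial>\<mu>) = (\<integral>x. (\<Prod>j\<in>B. F j x) * (if 1 - r * card B = 0 then 1 else f x powr (1 - r * card B)) \<partial>\<rho>)"
      unfolding FA(10)[OF Vm] F_def
      by (intro Bochner_Integration.integral_cong refl prod_dens_eq) (use B r FA(3) in auto)
    have eqW: "(\<integral>x. (\<Prod>j\<in>B. W j x) \<partial>\<nu>) = (\<integral>x. (\<Prod>j\<in>B. G j x) * (if 1 - r * card B = 0 then 1 else g x powr (1 - r * card B)) \<partial>\<rho>)"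
      unfolding FA(11)[OF Wm] G_def
      by (intro Bochner_Integration.integral_cong refl prod_dens_eq) (use B r FA(6) in auto)
    have "\<bar>(\<integral>x. (\<Prod>j\<in>B. W j x) \<partial>\<nu>) - (\<integral>x. (\<Prod>j\<in>B. V j x) \<partial>\<mu>)\<bar> \<le> bound d"
      using BC(3)[OF fm] unfolding eqV eqW bound_def L_def Em_def s_def by (simp add: abs_minus_commute)
    also have "bound d < e" using b(2) d by simp
    finally show "\<bar>(\<integral>x. (\<Prod>j\<in>B. W j x) \<partial>\<nu>) - (\<integral>x. (\<Prod>j\<in>B. V j x) \<partial>\<mu>)\<bar> < e" .
  qed
qed



definition GenTheta :: "real \<Rightarrow> nat set set set \<Rightarrow> (nat set set \<Rightarrow> real \<Rightarrow> real) \<Rightarrow> 'a measure \<Rightarrow> (nat \<Rightarrow> 'a \<Rightarrow> real) \<Rightarrow> real" where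
  "GenTheta r Q \<alpha> \<mu> V = (\<Sum>P\<in>Q. \<alpha> P (measure \<mu> (space \<mu>)) * tauP r \<mu> P V)"

lemma eventually_Fl:
  fixes S :: "real \<Rightarrow> 'x set"
  assumes mono: "\<And>d d'. 0 < d \<Longrightarrow> d \<le> d' \<Longrightarrow> S d \<subseteq> S d'"
  shows "eventually P (INF d\<in>{0<..}. principal (S d)) \<longleftrightarrow> (\<exists>d>0. \<forall>x\<in>S d. P x)"
proof -
  have "eventually P (INF d\<in>{0<..}. principal (S d)) \<longleftrightarrow> (\<exists>d\<in>{0<..}. eventually P (principal (S d)))"
  proof (rule eventually_INF_base)
    show "{0<..} \<noteq> ({} :: real set)" by auto
    fix a b :: real assume "a \<in> {0<..}" "b \<in> {0<..}"
    then show "\<exists>x\<in>{0<..}. principal (S x) \<le> inf (principal (S a)) (principal (S b))"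
      using mono[of "min a b" a] mono[of "min a b" b] by (intro bexI[of _ "min a b"]) auto
  qed
  then show ?thesis by (simp add: eventually_principal Bex_def)
qed

lemma partsM_block:
  assumes "P \<in> partsM r n" "B \<in> P" "0 < r"
  shows "B \<subseteq> {1..n}" "finite B" "B \<noteq> {}" "0 \<notin> B" "r * card B \<le> 1"
proof -
  have pa: "partition_on {1..n} P" and c: "real (card B) \<le> 1 / r" using assms unfolding partsM_def by auto
  show Bs: "B \<subseteq> {1..n}" using pa assms(2) unfolding partition_on_def by auto
  then show "finite B" by (rule finite_subset) simp
  show "B \<noteq> {}" using pa assms(2) unfolding partition_on_def by auto
  show "0 \<notin> B" using Bs by auto
  show "r * card B \<le> 1" using c assms(3) by (simp add: field_simps)
qed

lemma continuity_part:
  fixes r :: real and Q :: "nat set set set" and \<alpha> :: "nat set set \<Rightarrow> real \<Rightarrow> real"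
  assumes r: "0 < r" "r \<le> 1" and Q: "Q \<subseteq> partsM r n"
    and cont: "\<forall>P\<in>Q. continuous_on {0<..} (\<alpha> P)"
    and M: "Mr_point \<Omega> \<mu>" and VT: "\<forall>j\<in>{1..n}. TM r \<mu> (V j)"
  shows "\<forall>e>0. \<exists>d>0. \<forall>\<nu> W. Mr_point \<Omega> \<nu> \<and> (\<forall>j\<in>{1..n}. TM r \<nu> (W j))
            \<and> Sr_dist r \<mu> (\<lambda>_. 1) \<nu> (\<lambda>_. 1) < d \<and> (\<forall>j\<in>{1..n}. Sr_dist r \<mu> (V j) \<nu> (W j) < d)
          \<longrightarrow> \<bar>GenTheta r Q \<alpha> \<nu> W - GenTheta r Q \<alpha> \<mu> V\<bar> < e"
proof -
  define S where "S d = {z. Mr_point \<Omega> (fst z) \<and> (\<forall>j\<in>{1..n}. TM r (fst z) (snd z j))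
            \<and> Sr_dist r \<mu> (\<lambda>_. 1) (fst z) (\<lambda>_. 1) < d \<and> (\<forall>j\<in>{1..n}. Sr_dist r \<mu> (V j) (fst z) (snd z j) < d)}" for d
  define Fl where "Fl = (INF d\<in>{0<..}. principal (S d))"
  have ev: "eventually P Fl \<longleftrightarrow> (\<exists>d>0. \<forall>z\<in>S d. P z)" for P
    unfolding Fl_def by (rule eventually_Fl) (auto simp: S_def)
  have mpos: "0 < measure \<mu> (space \<mu>)"
    using M unfolding Mr_point_def by (auto simp: finite_measure.emeasure_eq_measure zero_less_measure_iff)
  have mlim: "((\<lambda>z. measure (fst z) (space (fst z))) \<longlongrightarrow> measure \<mu> (space \<mu>)) Fl"
  proof (rule tendstoI)
    fix e :: real assume e: "0 < e"
    define K where "K = (1/r) * (4 powr (1/r) * (measure \<mu> (space \<mu>) + 1)) powr (1 - r)"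
    note MC = mass_cont[OF r M, folded K_def]
    define d where "d = min 1 (e / (2 * K))"
    have d: "0 < d" "d \<le> 1" "K * d < e"
    proof -
      show "0 < d" "d \<le> 1" unfolding d_def using e MC(1) by auto
      have "K * d \<le> K * (e / (2 * K))" unfolding d_def using MC(1) by (intro mult_left_mono) auto
      also have "\<dots> = e / 2" using MC(1) by simp
      finally show "K * d < e" using e by simp
    qed
    show "eventually (\<lambda>z. dist (measure (fst z) (space (fst z))) (measure \<mu> (space \<mu>)) < e) Fl"
      unfolding ev
    proof (intro exI[of _ d] conjI ballI)
      show "0 < d" by fact
      fix z assume "z \<in> S d"
      then have "Mr_point \<Omega> (fst z)" "Sr_dist r \<mu> (\<lambda>_. 1) (fst z) (\<lambda>_. 1) < d" unfolding S_def by auto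
      from MC(3)[OF this(1) d(1) d(2) this(2)] d(3)
      show "dist (measure (fst z) (space (fst z))) (measure \<mu> (space \<mu>)) < e" by (simp add: dist_real_def)
    qed
  qed
  have blim: "((\<lambda>z. \<integral>x. (\<Prod>j\<in>B. snd z j x) \<partial>fst z) \<longlongrightarrow> (\<integral>x. (\<Prod>j\<in>B. V j x) \<partial>\<mu>)) Fl"
    if PQ: "P \<in> Q" and BP: "B \<in> P" for P B
  proof (rule tendstoI)
    fix e :: real assume e: "0 < e"
    have PM: "P \<in> partsM r n" using PQ Q by auto
    note Bp = partsM_block[OF PM BP r(1)]
    have VL: "\<forall>j\<in>B. Lr_dens r \<mu> (V j)" using VT Bp(1) unfolding TM_def by auto
    obtain d where d: "d > 0" and dd: "\<forall>\<nu> W. Mr_point \<Omega> \<nu> \<and> (\<forall>j\<in>B. Lr_dens r \<nu> (W j)) \<and> Sr_dist r \<mu> (\<lambda>_. 1) \<nu> (\<lambda>_. 1) < d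
        \<and> (\<forall>j\<in>B. Sr_dist r \<mu> (V j) \<nu> (W j) < d)
        \<longrightarrow> \<bar>(\<integral>x. (\<Prod>j\<in>B. W j x) \<partial>\<nu>) - (\<integral>x. (\<Prod>j\<in>B. V j x) \<partial>\<mu>)\<bar> < e"
      using block_cont[OF r M Bp(2) Bp(3) Bp(4) Bp(5) VL e] by blast
    show "eventually (\<lambda>z. dist (\<integral>x. (\<Prod>j\<in>B. snd z j x) \<partial>fst z) (\<integral>x. (\<Prod>j\<in>B. V j x) \<partial>\<mu>) < e) Fl"
      unfolding ev
    proof (intro exI[of _ d] conjI ballI)
      show "0 < d" by fact
      fix z assume "z \<in> S d"
      then have "Mr_point \<Omega> (fst z) \<and> (\<forall>j\<in>B. Lr_dens r (fst z) (snd z j)) \<and> Sr_dist r \<mu> (\<lambda>_. 1) (fst z) (\<lambda>_. 1) < d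
        \<and> (\<forall>j\<in>B. Sr_dist r \<mu> (V j) (fst z) (snd z j) < d)" unfolding S_def TM_def using Bp(1) by auto
      then show "dist (\<integral>x. (\<Prod>j\<in>B. snd z j x) \<partial>fst z) (\<integral>x. (\<Prod>j\<in>B. V j x) \<partial>\<mu>) < e"
        using dd by (simp add: dist_real_def)
    qed
  qed
  have Tlim: "((\<lambda>z. GenTheta r Q \<alpha> (fst z) (snd z)) \<longlongrightarrow> GenTheta r Q \<alpha> \<mu> V) Fl"
    unfolding GenTheta_def tauP_def tau_block_def
  proof (intro tendsto_sum tendsto_mult tendsto_prod tendsto_const)
    fix P assume PQ: "P \<in> Q"
    have "isCont (\<alpha> P) (measure \<mu> (space \<mu>))"
      using continuous_on_interior[OF cont[rule_format, OF PQ], of "measure \<mu> (space \<mu>)"] mpos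
      by (simp add: interior_open)
    then show "((\<lambda>z. \<alpha> P (measure (fst z) (space (fst z)))) \<longlongrightarrow> \<alpha> P (measure \<mu> (space \<mu>))) Fl"
      by (rule isCont_tendsto_compose) (rule mlim)
  next
    fix P B assume "P \<in> Q" "B \<in> P"
    then show "((\<lambda>z. \<integral>x. (\<Prod>j\<in>B. snd z j x) \<partial>fst z) \<longlongrightarrow> (\<integral>x. (\<Prod>j\<in>B. V j x) \<partial>\<mu>)) Fl" by (rule blim)
  qed
  show ?thesis
  proof (intro allI impI)
    fix e :: real assume e: "0 < e"
    have "eventually (\<lambda>z. dist (GenTheta r Q \<alpha> (fst z) (snd z)) (GenTheta r Q \<alpha> \<mu> V) < e) Fl"
      by (rule tendstoD[OF Tlim e])
    then obtain d where d: "d > 0" "\<forall>z\<in>S d. dist (GenTheta r Q \<alpha> (fst z) (snd z)) (GenTheta r Q \<alpha> \<mu> V) < e"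
      unfolding ev by blast
    show "\<exists>d>0. \<forall>\<nu> W. Mr_point \<Omega> \<nu> \<and> (\<forall>j\<in>{1..n}. TM r \<nu> (W j))
            \<and> Sr_dist r \<mu> (\<lambda>_. 1) \<nu> (\<lambda>_. 1) < d \<and> (\<forall>j\<in>{1..n}. Sr_dist r \<mu> (V j) \<nu> (W j) < d)
          \<longrightarrow> \<bar>GenTheta r Q \<alpha> \<nu> W - GenTheta r Q \<alpha> \<mu> V\<bar> < e"
    proof (intro exI[of _ d] conjI allI impI)
      show "0 < d" by fact
      fix \<nu> W assume "Mr_point \<Omega> \<nu> \<and> (\<forall>j\<in>{1..n}. TM r \<nu> (W j))
            \<and> Sr_dist r \<mu> (\<lambda>_. 1) \<nu> (\<lambda>_. 1) < d \<and> (\<forall>j\<in>{1..n}. Sr_dist r \<mu> (V j) \<nu> (W j) < d)"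
      then have "(\<nu>, W) \<in> S d" unfolding S_def by auto
      then show "\<bar>GenTheta r Q \<alpha> \<nu> W - GenTheta r Q \<alpha> \<mu> V\<bar> < e" using d(2) by (force simp: dist_real_def)
    qed
  qed
qed



lemma prod_integrable:
  fixes r :: real and X :: "nat \<Rightarrow> 'a \<Rightarrow> real"
  assumes r: "0 < r" and B: "finite B" "0 \<notin> B" "r * card B \<le> 1" and fin: "finite_measure \<mu>"
    and Xm: "\<forall>j\<in>B. X j \<in> borel_measurable \<mu>" and Xi: "\<forall>j\<in>B. integrable \<mu> (\<lambda>x. \<bar>X j x\<bar> powr (1/r))"
  shows "integrable \<mu> (\<lambda>x. \<Prod>j\<in>B. X j x)"
proof -
  interpret finite_measure \<mu> by fact
  have H: "integrable \<mu> (\<lambda>x. (\<Prod>j\<in>B. \<bar>X j x\<bar>) * (if 1 - r * card B = 0 then 1 else 1 powr (1 - r * card B)))"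
    by (rule holder_block(1)[of r B "\<lambda>j x. \<bar>X j x\<bar>" \<mu> "\<lambda>j. (\<integral>x. \<bar>X j x\<bar> powr (1/r) \<partial>\<mu>) + 1" "\<lambda>_. 1" "measure \<mu> (space \<mu>) + 1"])
       (use r B Xm Xi in \<open>auto intro: add_nonneg_pos\<close>)
  have e: "(\<lambda>x. (\<Prod>j\<in>B. \<bar>X j x\<bar>) * (if 1 - r * card B = 0 then 1 else (1::real) powr (1 - r * card B))) = (\<lambda>x. (\<Prod>j\<in>B. \<bar>X j x\<bar>))"
    by (rule ext) simp
  have H': "integrable \<mu> (\<lambda>x. (\<Prod>j\<in>B. \<bar>X j x\<bar>))" using H unfolding e .
  show ?thesis
  proof (rule Bochner_Integration.integrable_bound[OF H'])
    show "(\<lambda>x. \<Prod>j\<in>B. X j x) \<in> borel_measurable \<mu>" using Xm by (intro borel_measurable_prod) auto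
    show "AE x in \<mu>. norm (\<Prod>j\<in>B. X j x) \<le> norm (\<Prod>j\<in>B. \<bar>X j x\<bar>)" by (intro AE_I2) (simp add: abs_prod)
  qed
qed

lemma prod_upd:
  assumes "finite B" "i \<in> B"
  shows "(\<Prod>j\<in>B. (V(i := h)) j x) = h x * (\<Prod>j\<in>B - {i}. V j x)"
proof -
  have "(\<Prod>j\<in>B. (V(i := h)) j x) = (V(i := h)) i x * (\<Prod>j\<in>B - {i}. (V(i := h)) j x)"
    using assms by (simp add: prod.remove)
  also have "(\<Prod>j\<in>B - {i}. (V(i := h)) j x) = (\<Prod>j\<in>B - {i}. V j x)" by (intro prod.cong) auto
  finally show ?thesis by simp
qed

lemma tauP_linear:
  fixes r c :: real
  assumes r: "0 < r" and PM: "P \<in> partsM r n" and M: "Mr_point \<Omega> \<mu>"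
    and VT: "\<forall>j\<in>{1..n}. TM r \<mu> (V j)" and i: "i \<in> {1..n}" and psi: "TM r \<mu> \<psi>"
  shows "tauP r \<mu> P (V(i := (\<lambda>x. c * V i x + \<psi> x))) = c * tauP r \<mu> P V + tauP r \<mu> P (V(i := \<psi>))"
proof -
  have pa: "partition_on {1..n} P" using PM unfolding partsM_def by auto
  have "i \<in> \<Union>P" using pa i unfolding partition_on_def by auto
  then obtain B0 where B0: "B0 \<in> P" "i \<in> B0" by blast
  have "P \<subseteq> Pow {1..n}" using pa unfolding partition_on_def by auto
  then have finP: "finite P" by (rule finite_subset) simp
  note Bp = partsM_block[OF PM B0(1) r]
  have other: "i \<notin> B" if "B \<in> P" "B \<noteq> B0" for B
    using pa that B0 unfolding partition_on_def disjoint_def by auto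
  have tb_other: "tau_block r \<mu> B (V(i := h)) = tau_block r \<mu> B V" if "B \<in> P - {B0}" for B h
  proof -
    have iB: "i \<notin> B" using other[of B] that by auto
    have "(\<Prod>j\<in>B. (V(i := h)) j x) = (\<Prod>j\<in>B. V j x)" for x
      by (rule prod.cong[OF refl]) (use iB in auto)
    then show ?thesis unfolding tau_block_def by simp
  qed
  have split: "tauP r \<mu> P U = tau_block r \<mu> B0 U * (\<Prod>B\<in>P - {B0}. tau_block r \<mu> B U)" for U
    unfolding tauP_def using finP B0 by (simp add: prod.remove)
  have Sm: "sets \<mu> = sets \<Omega>" "finite_measure \<mu>" using Mr_point_D[OF M] by auto
  have VL: "\<forall>j\<in>B0. V j \<in> borel_measurable \<mu> \<and> integrable \<mu> (\<lambda>x. \<bar>V j x\<bar> powr (1/r))"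
    using VT Bp(1) unfolding TM_def Lr_dens_def by auto
  have psL: "\<psi> \<in> borel_measurable \<mu>" "integrable \<mu> (\<lambda>x. \<bar>\<psi> x\<bar> powr (1/r))" using psi unfolding TM_def Lr_dens_def by auto
  have I1: "integrable \<mu> (\<lambda>x. \<Prod>j\<in>B0. V j x)"
    by (rule prod_integrable[OF r Bp(2) Bp(4) Bp(5) Sm(2)]) (use VL in auto)
  have I2: "integrable \<mu> (\<lambda>x. \<Prod>j\<in>B0. (V(i := \<psi>)) j x)"
    by (rule prod_integrable[OF r Bp(2) Bp(4) Bp(5) Sm(2)]) (use VL psL in auto)
  have e1: "(\<Prod>j\<in>B0. V j x) = V i x * (\<Prod>j\<in>B0 - {i}. V j x)" for x
    using prod_upd[OF Bp(2) B0(2), of V "V i" x] by simp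
  have tb: "tau_block r \<mu> B0 (V(i := (\<lambda>x. c * V i x + \<psi> x))) = c * tau_block r \<mu> B0 V + tau_block r \<mu> B0 (V(i := \<psi>))"
  proof -
    have "(\<integral>x. (\<Prod>j\<in>B0. (V(i := (\<lambda>x. c * V i x + \<psi> x))) j x) \<partial>\<mu>)
        = (\<integral>x. c * (\<Prod>j\<in>B0. V j x) + (\<Prod>j\<in>B0. (V(i := \<psi>)) j x) \<partial>\<mu>)"
    proof (intro Bochner_Integration.integral_cong refl)
      fix x
      have a: "(\<Prod>j\<in>B0. (V(i := (\<lambda>x. c * V i x + \<psi> x))) j x) = (c * V i x + \<psi> x) * (\<Prod>j\<in>B0 - {i}. V j x)"
        using prod_upd[OF Bp(2) B0(2), of V "\<lambda>x. c * V i x + \<psi> x" x] by simp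
      have b: "(\<Prod>j\<in>B0. (V(i := \<psi>)) j x) = \<psi> x * (\<Prod>j\<in>B0 - {i}. V j x)"
        using prod_upd[OF Bp(2) B0(2), of V \<psi> x] by simp
      show "(\<Prod>j\<in>B0. (V(i := (\<lambda>x. c * V i x + \<psi> x))) j x) = c * (\<Prod>j\<in>B0. V j x) + (\<Prod>j\<in>B0. (V(i := \<psi>)) j x)"
        unfolding a b e1 by (simp add: algebra_simps)
    qed
    also have "\<dots> = c * (\<integral>x. (\<Prod>j\<in>B0. V j x) \<partial>\<mu>) + (\<integral>x. (\<Prod>j\<in>B0. (V(i := \<psi>)) j x) \<partial>\<mu>)"
      using I1 I2 by simp
    finally show ?thesis unfolding tau_block_def by (simp add: algebra_simps)
  qed
  show ?thesis
    unfolding split tb using tb_other by (simp add: algebra_simps prod.cong[OF refl tb_other])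
qed

lemma tauP_cong:
  fixes r :: real
  assumes PM: "P \<in> partsM r n" and r: "0 < r"
    and VW: "\<forall>j\<in>{1..n}. V j \<in> borel_measurable \<mu> \<and> W j \<in> borel_measurable \<mu> \<and> (AE x in \<mu>. V j x = W j x)"
  shows "tauP r \<mu> P V = tauP r \<mu> P W"
  unfolding tauP_def
proof (intro prod.cong refl)
  fix B assume B: "B \<in> P"
  note Bp = partsM_block[OF PM B r]
  have "AE x in \<mu>. \<forall>j\<in>B. V j x = W j x" using VW Bp(1) Bp(2) by (subst AE_finite_all) auto
  then have "AE x in \<mu>. (\<Prod>j\<in>B. V j x) = (\<Prod>j\<in>B. W j x)" by eventually_elim simp
  then have "(\<integral>x. (\<Prod>j\<in>B. V j x) \<partial>\<mu>) = (\<integral>x. (\<Prod>j\<in>B. W j x) \<partial>\<mu>)"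
    using VW Bp(1) by (intro integral_cong_AE) (auto intro!: borel_measurable_prod)
  then show "tau_block r \<mu> B V = tau_block r \<mu> B W" unfolding tau_block_def by simp
qed

lemma gen_tensor:
  fixes r :: real and Q :: "nat set set set" and \<alpha> :: "nat set set \<Rightarrow> real \<Rightarrow> real"
  assumes r: "0 < r" "r \<le> 1" and Q: "Q \<subseteq> partsM r n"
    and cont: "\<forall>P\<in>Q. continuous_on {0<..} (\<alpha> P)"
  shows "tensor_field r n (Mr_point \<Omega>) (TM r) (GenTheta r Q \<alpha>)"
  unfolding tensor_field_def
proof (intro conjI allI impI)
  fix \<mu> V W assume H: "Mr_point \<Omega> \<mu> \<and> (\<forall>j\<in>{1..n}. TM r \<mu> (V j) \<and> TM r \<mu> (W j) \<and> (AE x in \<mu>. V j x = W j x))"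
  have "\<forall>j\<in>{1..n}. V j \<in> borel_measurable \<mu> \<and> W j \<in> borel_measurable \<mu> \<and> (AE x in \<mu>. V j x = W j x)"
    using H unfolding TM_def Lr_dens_def by auto
  then have "tauP r \<mu> P V = tauP r \<mu> P W" if "P \<in> Q" for P using tauP_cong[of P r n] that Q r by blast
  then show "GenTheta r Q \<alpha> \<mu> V = GenTheta r Q \<alpha> \<mu> W" unfolding GenTheta_def by simp
next
  fix \<mu> V i \<psi> and c :: real
  assume H: "Mr_point \<Omega> \<mu> \<and> (\<forall>j\<in>{1..n}. TM r \<mu> (V j)) \<and> i \<in> {1..n} \<and> TM r \<mu> \<psi>"
  have "\<alpha> P (measure \<mu> (space \<mu>)) * tauP r \<mu> P (V(i := (\<lambda>x. c * V i x + \<psi> x)))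
      = c * (\<alpha> P (measure \<mu> (space \<mu>)) * tauP r \<mu> P V) + \<alpha> P (measure \<mu> (space \<mu>)) * tauP r \<mu> P (V(i := \<psi>))"
    if "P \<in> Q" for P
    using tauP_linear[of r P n \<Omega> \<mu> V i \<psi> c] H that Q r by (auto simp: algebra_simps)
  then show "GenTheta r Q \<alpha> \<mu> (V(i := (\<lambda>x. c * V i x + \<psi> x))) = c * GenTheta r Q \<alpha> \<mu> V + GenTheta r Q \<alpha> \<mu> (V(i := \<psi>))"
    unfolding GenTheta_def by (simp add: sum_distrib_left sum.distrib)
next
  fix \<mu> V and e :: real assume H: "Mr_point \<Omega> \<mu> \<and> (\<forall>j\<in>{1..n}. TM r \<mu> (V j))" and e: "0 < e"
  show "\<exists>d>0. \<forall>\<nu> W. Mr_point \<Omega> \<nu> \<and> (\<forall>j\<in>{1..n}. TM r \<nu> (W j))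
            \<and> Sr_dist r \<mu> (\<lambda>_. 1) \<nu> (\<lambda>_. 1) < d \<and> (\<forall>j\<in>{1..n}. Sr_dist r \<mu> (V j) \<nu> (W j) < d)
          \<longrightarrow> \<bar>GenTheta r Q \<alpha> \<nu> W - GenTheta r Q \<alpha> \<mu> V\<bar> < e"
    using continuity_part[OF r Q cont] H e by blast
qed

lemma tensor_field_mono:
  assumes T: "tensor_field r n Pt T \<Theta>" and P: "\<And>\<mu>. Pt' \<mu> \<Longrightarrow> Pt \<mu>"
    and TT: "\<And>\<mu> \<phi>. Pt' \<mu> \<Longrightarrow> T' \<mu> \<phi> \<Longrightarrow> T \<mu> \<phi>"
  shows "tensor_field r n Pt' T' \<Theta>"
proof -
  note T' = T[unfolded tensor_field_def]
  show ?thesis unfolding tensor_field_def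
  proof (intro conjI allI impI)
    fix \<mu> V W assume "Pt' \<mu> \<and> (\<forall>j\<in>{1..n}. T' \<mu> (V j) \<and> T' \<mu> (W j) \<and> (AE x in \<mu>. V j x = W j x))"
    then have "Pt \<mu> \<and> (\<forall>j\<in>{1..n}. T \<mu> (V j) \<and> T \<mu> (W j) \<and> (AE x in \<mu>. V j x = W j x))" using P TT by blast
    then show "\<Theta> \<mu> V = \<Theta> \<mu> W" using T' by blast
  next
    fix \<mu> V i \<psi> c assume "Pt' \<mu> \<and> (\<forall>j\<in>{1..n}. T' \<mu> (V j)) \<and> i \<in> {1..n} \<and> T' \<mu> \<psi>"
    then have "Pt \<mu> \<and> (\<forall>j\<in>{1..n}. T \<mu> (V j)) \<and> i \<in> {1..n} \<and> T \<mu> \<psi>" using P TT by blast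
    then show "\<Theta> \<mu> (V(i := (\<lambda>x. c * V i x + \<psi> x))) = c * \<Theta> \<mu> V + \<Theta> \<mu> (V(i := \<psi>))" using T' by blast
  next
    fix \<mu> V and e :: real assume "Pt' \<mu> \<and> (\<forall>j\<in>{1..n}. T' \<mu> (V j))" and e: "0 < e"
    then have H: "Pt \<mu> \<and> (\<forall>j\<in>{1..n}. T \<mu> (V j))" using P TT by blast
    {
      obtain d where d: "d > 0" "\<forall>\<nu> W. Pt \<nu> \<and> (\<forall>j\<in>{1..n}. T \<nu> (W j))
            \<and> Sr_dist r \<mu> (\<lambda>_. 1) \<nu> (\<lambda>_. 1) < d \<and> (\<forall>j\<in>{1..n}. Sr_dist r \<mu> (V j) \<nu> (W j) < d)
          \<longrightarrow> \<bar>\<Theta> \<nu> W - \<Theta> \<mu> V\<bar> < e"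
        using T'[THEN conjunct2, THEN conjunct2, rule_format, OF H e] by blast
      show "\<exists>d>0. \<forall>\<nu> W. Pt' \<nu> \<and> (\<forall>j\<in>{1..n}. T' \<nu> (W j))
            \<and> Sr_dist r \<mu> (\<lambda>_. 1) \<nu> (\<lambda>_. 1) < d \<and> (\<forall>j\<in>{1..n}. Sr_dist r \<mu> (V j) \<nu> (W j) < d)
          \<longrightarrow> \<bar>\<Theta> \<nu> W - \<Theta> \<mu> V\<bar> < e"
        using d P TT by blast
    }
  qed
qed



locale ckern =
  fixes \<Omega> :: "'a measure" and \<Omega>' :: "'b measure" and K :: "'a \<Rightarrow> 'b measure" and \<kappa> :: "'b \<Rightarrow> 'a" and \<mu> :: "'a measure"
  assumes Km: "K \<in> \<Omega> \<rightarrow>\<^sub>M prob_algebra \<Omega>'"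
    and \<kappa>m: "\<kappa> \<in> \<Omega>' \<rightarrow>\<^sub>M \<Omega>"
    and dist: "\<forall>\<omega>\<in>space \<Omega>. distr (K \<omega>) \<Omega> \<kappa> = return \<Omega> \<omega>"
    and M: "Mr_point \<Omega> \<mu>"
begin

abbreviation "N \<equiv> kpush \<Omega>' K \<mu>"

lemma Sm: "sets \<mu> = sets \<Omega>" "finite_measure \<mu>" "space \<mu> = space \<Omega>" "space \<mu> \<noteq> {}"
  using Mr_point_D[OF M] by auto

lemma Kx: "x \<in> space \<Omega> \<Longrightarrow> sets (K x) = sets \<Omega>' \<and> prob_space (K x)"
  using measurable_space[OF Km] by (auto simp: space_prob_algebra)

lemma Kx_space: "x \<in> space \<Omega> \<Longrightarrow> space (K x) = space \<Omega>'"
proof -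
  assume x: "x \<in> space \<Omega>"
  then have "sets (K x) = sets \<Omega>'" using Kx by simp
  then show ?thesis by (rule sets_eq_imp_space_eq)
qed

lemma Km': "K \<in> \<mu> \<rightarrow>\<^sub>M subprob_algebra \<Omega>'"
  by (subst measurable_cong_sets[OF Sm(1) refl]) (rule measurable_prob_algebraD[OF Km])

lemma N_bind: "N = bind \<mu> K"
proof -
  have sb: "sets (bind \<mu> K) = sets \<Omega>'" using Kx Sm by (intro sets_bind) auto
  have spb: "space (bind \<mu> K) = space \<Omega>'" using sb by (rule sets_eq_imp_space_eq)
  have "bind \<mu> K = measure_of (space (bind \<mu> K)) (sets (bind \<mu> K)) (emeasure (bind \<mu> K))"
    by (rule measure_of_of_measure[symmetric])
  also have "\<dots> = measure_of (space \<Omega>') (sets \<Omega>') (emeasure (bind \<mu> K))" unfolding sb spb ..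
  also have "\<dots> = N" unfolding kpush_def
  proof (rule measure_of_eq)
    show "sets \<Omega>' \<subseteq> Pow (space \<Omega>')" by (rule sets.space_closed)
    fix A assume "A \<in> sigma_sets (space \<Omega>') (sets \<Omega>')"
    then have A: "A \<in> sets \<Omega>'" by (simp add: sets.sigma_sets_eq)
    show "emeasure (bind \<mu> K) A = (\<integral>\<^sup>+\<omega>. emeasure (K \<omega>) A \<partial>\<mu>)"
      by (rule emeasure_bind[OF Sm(4) Km' A])
  qed
  finally show ?thesis ..
qed

lemma sets_N: "sets N = sets \<Omega>'" and space_N: "space N = space \<Omega>'"
proof -
  show "sets N = sets \<Omega>'" unfolding N_bind using Kx Sm by (intro sets_bind) auto
  then show "space N = space \<Omega>'" by (rule sets_eq_imp_space_eq)
qed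

lemma \<kappa>mN: "\<kappa> \<in> N \<rightarrow>\<^sub>M \<Omega>"
  by (subst measurable_cong_sets[OF sets_N refl]) (rule \<kappa>m)

lemma emeasure_N: "A \<in> sets \<Omega>' \<Longrightarrow> emeasure N A = (\<integral>\<^sup>+\<omega>. emeasure (K \<omega>) A \<partial>\<mu>)"
  unfolding N_bind by (rule emeasure_bind[OF Sm(4) Km'])

lemma K_preimage: "x \<in> space \<Omega> \<Longrightarrow> A \<in> sets \<Omega> \<Longrightarrow> emeasure (K x) (\<kappa> -` A \<inter> space \<Omega>') = indicator A x"
proof -
  assume x: "x \<in> space \<Omega>" and A: "A \<in> sets \<Omega>"
  have km: "\<kappa> \<in> K x \<rightarrow>\<^sub>M \<Omega>" using \<kappa>m measurable_cong_sets[of "K x" \<Omega>' \<Omega> \<Omega>] Kx[OF x] by simp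
  have "emeasure (distr (K x) \<Omega> \<kappa>) A = emeasure (K x) (\<kappa> -` A \<inter> space (K x))"
    by (rule emeasure_distr[OF km A])
  then show ?thesis using dist x A Kx_space[OF x] by simp
qed

lemma distr_N: "distr N \<Omega> \<kappa> = \<mu>"
proof (rule measure_eqI)
  show "sets (distr N \<Omega> \<kappa>) = sets \<mu>" using Sm by simp
  fix A assume "A \<in> sets (distr N \<Omega> \<kappa>)"
  then have A: "A \<in> sets \<Omega>" by simp
  have pre: "\<kappa> -` A \<inter> space \<Omega>' \<in> sets \<Omega>'" using \<kappa>m A by (rule measurable_sets)
  have "emeasure (distr N \<Omega> \<kappa>) A = emeasure N (\<kappa> -` A \<inter> space N)" by (rule emeasure_distr[OF \<kappa>mN A])
  also have "\<dots> = (\<integral>\<^sup>+\<omega>. emeasure (K \<omega>) (\<kappa> -` A \<inter> space \<Omega>') \<partial>\<mu>)" unfolding space_N by (rule emeasure_N[OF pre])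
  also have "\<dots> = (\<integral>\<^sup>+\<omega>. indicator A \<omega> \<partial>\<mu>)"
    by (rule nn_integral_cong) (use K_preimage A Sm in auto)
  also have "\<dots> = emeasure \<mu> A" using A Sm by simp
  finally show "emeasure (distr N \<Omega> \<kappa>) A = emeasure \<mu> A" .
qed

lemma mass_N: "measure N (space N) = measure \<mu> (space \<mu>)"
proof -
  have "measure \<mu> (space \<mu>) = measure (distr N \<Omega> \<kappa>) (space \<Omega>)" using distr_N Sm by simp
  also have "\<dots> = measure N (\<kappa> -` space \<Omega> \<inter> space N)" by (rule measure_distr[OF \<kappa>mN]) simp
  also have "\<kappa> -` space \<Omega> \<inter> space N = space N" using measurable_space[OF \<kappa>mN] by auto
  finally show ?thesis by simp
qed

lemma AE_K: "\<omega> \<in> space \<Omega> \<Longrightarrow> h \<in> borel_measurable \<Omega> \<Longrightarrow> AE y in K \<omega>. h (\<kappa> y) = (h \<omega> :: real)"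
proof -
  assume w: "\<omega> \<in> space \<Omega>" and hm[measurable]: "h \<in> borel_measurable \<Omega>"
  have km: "\<kappa> \<in> K \<omega> \<rightarrow>\<^sub>M \<Omega>" using \<kappa>m measurable_cong_sets[of "K \<omega>" \<Omega>' \<Omega> \<Omega>] Kx[OF w] by simp
  have P: "{x \<in> space \<Omega>. h x = h \<omega>} \<in> sets \<Omega>" by measurable
  have r1: "AE x in return \<Omega> \<omega>. h x = h \<omega>" using w by (subst AE_return) auto
  have "AE x in distr (K \<omega>) \<Omega> \<kappa>. h x = h \<omega>" unfolding dist[rule_format, OF w] by (rule r1)
  then show ?thesis using AE_distr_iff[OF km P] by simp
qed

lemma nn_key:
  assumes hm[measurable]: "h \<in> borel_measurable \<Omega>" and A: "A \<in> sets \<Omega>'"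
  shows "(\<integral>\<^sup>+y. ennreal (indicator A y * h (\<kappa> y)) \<partial>N) = (\<integral>\<^sup>+\<omega>. ennreal (h \<omega> * measure (K \<omega>) A) \<partial>\<mu>)"
proof -
  have f: "(\<lambda>y. ennreal (indicator A y * h (\<kappa> y))) \<in> borel_measurable \<Omega>'"
    using \<kappa>m A by measurable
  have "(\<integral>\<^sup>+y. ennreal (indicator A y * h (\<kappa> y)) \<partial>N) = (\<integral>\<^sup>+\<omega>. \<integral>\<^sup>+y. ennreal (indicator A y * h (\<kappa> y)) \<partial>K \<omega> \<partial>\<mu>)"
    unfolding N_bind by (rule nn_integral_bind[OF f Km'])
  also have "\<dots> = (\<integral>\<^sup>+\<omega>. ennreal (h \<omega> * measure (K \<omega>) A) \<partial>\<mu>)"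
  proof (rule nn_integral_cong)
    fix \<omega> assume "\<omega> \<in> space \<mu>"
    then have w: "\<omega> \<in> space \<Omega>" using Sm by simp
    interpret P: prob_space "K \<omega>" using Kx[OF w] by simp
    have A': "A \<in> sets (K \<omega>)" using Kx[OF w] A by simp
    have "(\<integral>\<^sup>+y. ennreal (indicator A y * h (\<kappa> y)) \<partial>K \<omega>) = (\<integral>\<^sup>+y. ennreal (h \<omega>) * indicator A y \<partial>K \<omega>)"
    proof (rule nn_integral_cong_AE)
      show "AE y in K \<omega>. ennreal (indicator A y * h (\<kappa> y)) = ennreal (h \<omega>) * indicator A y"
        using AE_K[OF w hm] by eventually_elim (auto simp: indicator_def)
    qed
    also have "\<dots> = ennreal (h \<omega>) * emeasure (K \<omega>) A" by (rule nn_integral_cmult_indicator[OF A'])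
    also have "\<dots> = ennreal (h \<omega> * measure (K \<omega>) A)"
    proof (cases "0 \<le> h \<omega>")
      case True then show ?thesis by (simp add: P.emeasure_eq_measure ennreal_mult)
    next
      case False
      then have "h \<omega> * measure (K \<omega>) A \<le> 0" by (simp add: mult_nonpos_nonneg)
      then show ?thesis using False by (simp add: ennreal_neg)
    qed
    finally show "(\<integral>\<^sup>+y. ennreal (indicator A y * h (\<kappa> y)) \<partial>K \<omega>) = ennreal (h \<omega> * measure (K \<omega>) A)" .
  qed
  finally show ?thesis .
qed

lemma kderiv_prop:
  assumes L: "Lr_dens r \<mu> \<phi>" and r: "0 < r" "r \<le> 1"
  shows "(\<lambda>y. \<phi> (\<kappa> y)) \<in> borel_measurable \<Omega>' \<and> integrable N (\<lambda>y. \<phi> (\<kappa> y)) \<and>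
      (\<forall>A\<in>sets \<Omega>'. set_lebesgue_integral N A (\<lambda>y. \<phi> (\<kappa> y)) = (\<integral>\<omega>. \<phi> \<omega> * measure (K \<omega>) A \<partial>\<mu>))"
proof -
  have pm[measurable]: "\<phi> \<in> borel_measurable \<Omega>" by (rule Lr_dens_meas[OF L Sm(1)])
  have pm': "\<phi> \<in> borel_measurable \<mu>" by (subst measurable_cong_sets[OF Sm(1) refl]) (rule pm)
  interpret mu: finite_measure \<mu> by (rule Sm(2))
  have Ip: "integrable \<mu> \<phi>"
  proof (rule Bochner_Integration.integrable_bound[OF _ pm'])
    show "integrable \<mu> (\<lambda>x. 1 + \<bar>\<phi> x\<bar> powr (1/r))" using L unfolding Lr_dens_def by simp
    show "AE x in \<mu>. norm (\<phi> x) \<le> norm (1 + \<bar>\<phi> x\<bar> powr (1/r))"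
    proof (intro AE_I2)
      fix x
      have "\<bar>\<phi> x\<bar> \<le> 1 + \<bar>\<phi> x\<bar> powr (1/r)"
      proof (cases "\<bar>\<phi> x\<bar> \<le> 1")
        case True
        have "0 \<le> \<bar>\<phi> x\<bar> powr (1/r)" by simp
        then show ?thesis using True by linarith
      next
        case False
        then have "\<bar>\<phi> x\<bar> powr 1 \<le> \<bar>\<phi> x\<bar> powr (1/r)" using r by (intro powr_mono) auto
        then show ?thesis by simp
      qed
      then show "norm (\<phi> x) \<le> norm (1 + \<bar>\<phi> x\<bar> powr (1/r))" by simp
    qed
  qed
  have m1: "(\<lambda>y. \<phi> (\<kappa> y)) \<in> borel_measurable \<Omega>'" using \<kappa>m by measurable
  have IN: "integrable N (\<lambda>y. \<phi> (\<kappa> y))"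
    using integrable_distr_eq[OF \<kappa>mN pm] Ip distr_N by simp
  have SI: "set_lebesgue_integral N A (\<lambda>y. \<phi> (\<kappa> y)) = (\<integral>\<omega>. \<phi> \<omega> * measure (K \<omega>) A \<partial>\<mu>)" if A: "A \<in> sets \<Omega>'" for A
  proof -
    have AN: "A \<in> sets N" using A sets_N by simp
    have I1: "integrable N (\<lambda>y. indicator A y * \<phi> (\<kappa> y))"
      using integrable_mult_indicator[OF AN IN] by simp
    have mK: "(\<lambda>\<omega>. measure (K \<omega>) A) \<in> borel_measurable \<mu>"
      by (subst measurable_cong_sets[OF Sm(1) refl]) (rule measurable_compose[OF Km measurable_measure_prob_algebra[OF A]])
    have I2: "integrable \<mu> (\<lambda>\<omega>. \<phi> \<omega> * measure (K \<omega>) A)"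
    proof (rule Bochner_Integration.integrable_bound[OF Ip])
      show "(\<lambda>\<omega>. \<phi> \<omega> * measure (K \<omega>) A) \<in> borel_measurable \<mu>" using pm' mK by measurable
      show "AE x in \<mu>. norm (\<phi> x * measure (K x) A) \<le> norm (\<phi> x)"
      proof (intro AE_I2)
        fix x assume "x \<in> space \<mu>"
        then have w: "x \<in> space \<Omega>" using Sm by simp
        interpret P: prob_space "K x" using Kx[OF w] by simp
        have "measure (K x) A \<le> 1" by simp
        then show "norm (\<phi> x * measure (K x) A) \<le> norm (\<phi> x)"
          by (simp add: abs_mult mult_left_le)
      qed
    qed
    have mm: "(\<lambda>x. - \<phi> x) \<in> borel_measurable \<Omega>" by measurable
    have "set_lebesgue_integral N A (\<lambda>y. \<phi> (\<kappa> y)) = integral\<^sup>L N (\<lambda>y. indicator A y * \<phi> (\<kappa> y))"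
      unfolding set_lebesgue_integral_def by simp
    also have "\<dots> = enn2real (\<integral>\<^sup>+y. ennreal (indicator A y * \<phi> (\<kappa> y)) \<partial>N)
        - enn2real (\<integral>\<^sup>+y. ennreal (- (indicator A y * \<phi> (\<kappa> y))) \<partial>N)"
      by (rule real_lebesgue_integral_def[OF I1])
    also have "(\<integral>\<^sup>+y. ennreal (- (indicator A y * \<phi> (\<kappa> y))) \<partial>N) = (\<integral>\<^sup>+y. ennreal (indicator A y * - \<phi> (\<kappa> y)) \<partial>N)"
      by simp
    also have "(\<integral>\<^sup>+y. ennreal (indicator A y * - \<phi> (\<kappa> y)) \<partial>N) = (\<integral>\<^sup>+\<omega>. ennreal (- \<phi> \<omega> * measure (K \<omega>) A) \<partial>\<mu>)"
      using nn_key[OF mm A] by simp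
    also have "(\<integral>\<^sup>+y. ennreal (indicator A y * \<phi> (\<kappa> y)) \<partial>N) = (\<integral>\<^sup>+\<omega>. ennreal (\<phi> \<omega> * measure (K \<omega>) A) \<partial>\<mu>)"
      by (rule nn_key[OF pm A])
    also have "enn2real (\<integral>\<^sup>+\<omega>. ennreal (\<phi> \<omega> * measure (K \<omega>) A) \<partial>\<mu>) - enn2real (\<integral>\<^sup>+\<omega>. ennreal (- \<phi> \<omega> * measure (K \<omega>) A) \<partial>\<mu>)
        = (\<integral>\<omega>. \<phi> \<omega> * measure (K \<omega>) A \<partial>\<mu>)"
      using real_lebesgue_integral_def[OF I2] by simp
    finally show ?thesis .
  qed
  show ?thesis using m1 IN SI by blast
qed

lemma kderiv_AE:
  assumes L: "Lr_dens r \<mu> \<phi>" and r: "0 < r" "r \<le> 1"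
  shows "kderiv \<Omega>' K \<mu> \<phi> \<in> borel_measurable N" "AE y in N. kderiv \<Omega>' K \<mu> \<phi> y = \<phi> (\<kappa> y)"
proof -
  note KP = kderiv_prop[OF L r]
  define Pr where "Pr g \<longleftrightarrow> g \<in> borel_measurable \<Omega>' \<and> integrable N g \<and>
      (\<forall>A\<in>sets \<Omega>'. set_lebesgue_integral N A g = (\<integral>\<omega>. \<phi> \<omega> * measure (K \<omega>) A \<partial>\<mu>))" for g
  have "Pr (\<lambda>y. \<phi> (\<kappa> y))" using KP unfolding Pr_def by blast
  then have "Pr (SOME g. Pr g)" using someI[of Pr "\<lambda>y. \<phi> (\<kappa> y)"] by blast
  moreover have kd: "kderiv \<Omega>' K \<mu> \<phi> = (SOME g. Pr g)" unfolding kderiv_def Pr_def by simp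
  ultimately have P: "Pr (kderiv \<Omega>' K \<mu> \<phi>)" by simp
  show "kderiv \<Omega>' K \<mu> \<phi> \<in> borel_measurable N"
    using P unfolding Pr_def by (subst measurable_cong_sets[OF sets_N refl]) simp
  show "AE y in N. kderiv \<Omega>' K \<mu> \<phi> y = \<phi> (\<kappa> y)"
  proof (rule density_unique_real)
    show "integrable N (kderiv \<Omega>' K \<mu> \<phi>)" using P unfolding Pr_def by simp
    show "integrable N (\<lambda>y. \<phi> (\<kappa> y))" using KP by simp
    fix A assume "A \<in> sets N"
    then have A: "A \<in> sets \<Omega>'" using sets_N by simp
    show "set_lebesgue_integral N A (kderiv \<Omega>' K \<mu> \<phi>) = set_lebesgue_integral N A (\<lambda>y. \<phi> (\<kappa> y))"
      using P KP A unfolding Pr_def by simp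
  qed
qed

lemma tauP_pull:
  fixes r :: real
  assumes r: "0 < r" "r \<le> 1" and PM: "P \<in> partsM r n" and VT: "\<forall>j\<in>{1..n}. TM r \<mu> (V j)"
  shows "tauP r N P (\<lambda>j. kderiv \<Omega>' K \<mu> (V j)) = tauP r \<mu> P V"
  unfolding tauP_def
proof (intro prod.cong refl)
  fix B assume B: "B \<in> P"
  note Bp = partsM_block[OF PM B r(1)]
  have L: "Lr_dens r \<mu> (V j)" if "j \<in> B" for j using VT Bp(1) that unfolding TM_def by auto
  have Vm: "V j \<in> borel_measurable \<Omega>" if "j \<in> B" for j using Lr_dens_meas[OF L[OF that] Sm(1)] .
  have "AE y in N. \<forall>j\<in>B. kderiv \<Omega>' K \<mu> (V j) y = V j (\<kappa> y)"
    using kderiv_AE(2)[OF L r] Bp(2) by (subst AE_finite_all) auto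
  then have AE: "AE y in N. (\<Prod>j\<in>B. kderiv \<Omega>' K \<mu> (V j) y) = (\<Prod>j\<in>B. V j (\<kappa> y))"
    by eventually_elim simp
  have pm: "(\<lambda>x. \<Prod>j\<in>B. V j x) \<in> borel_measurable \<Omega>" using Vm by (intro borel_measurable_prod) auto
  have "(\<integral>y. (\<Prod>j\<in>B. kderiv \<Omega>' K \<mu> (V j) y) \<partial>N) = (\<integral>y. (\<Prod>j\<in>B. V j (\<kappa> y)) \<partial>N)"
  proof (rule integral_cong_AE[OF _ _ AE])
    show "(\<lambda>y. \<Prod>j\<in>B. kderiv \<Omega>' K \<mu> (V j) y) \<in> borel_measurable N"
      using kderiv_AE(1)[OF L r] by (intro borel_measurable_prod) auto
    show "(\<lambda>y. \<Prod>j\<in>B. V j (\<kappa> y)) \<in> borel_measurable N"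
      using measurable_comp[OF \<kappa>mN pm] by (simp add: comp_def)
  qed
  also have "\<dots> = integral\<^sup>L (distr N \<Omega> \<kappa>) (\<lambda>x. \<Prod>j\<in>B. V j x)"
    by (rule integral_distr[OF \<kappa>mN pm, symmetric])
  also have "\<dots> = (\<integral>x. (\<Prod>j\<in>B. V j x) \<partial>\<mu>)" unfolding distr_N ..
  finally show "tau_block r N B (\<lambda>j. kderiv \<Omega>' K \<mu> (V j)) = tau_block r \<mu> B V"
    unfolding tau_block_def by simp
qed

end

lemma gen_congruent:
  fixes r :: real
  assumes r: "0 < r" "r \<le> 1" and Q: "Q \<subseteq> partsM r n"
    and CK: "congruent_kernel \<Omega> \<Omega>' K" and M: "Mr_point \<Omega> \<mu>" and VT: "\<forall>j\<in>{1..n}. TM r \<mu> (V j)"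
  shows "pullback \<Omega>' K (GenTheta r Q \<alpha>) \<mu> V = GenTheta r Q \<alpha> \<mu> V"
proof -
  obtain \<kappa> where \<kappa>: "\<kappa> \<in> \<Omega>' \<rightarrow>\<^sub>M \<Omega>" "\<forall>\<omega>\<in>space \<Omega>. distr (K \<omega>) \<Omega> \<kappa> = return \<Omega> \<omega>"
    and Km: "K \<in> \<Omega> \<rightarrow>\<^sub>M prob_algebra \<Omega>'"
    using CK unfolding congruent_kernel_def by blast
  interpret ckern \<Omega> \<Omega>' K \<kappa> \<mu> using Km \<kappa> M by unfold_locales auto
  show ?thesis
    unfolding pullback_def GenTheta_def mass_N
    using tauP_pull[OF r _ VT] Q by (intro sum.cong refl) auto
qed



lemma Pr_Mr: "Pr_point \<Omega> \<mu> \<Longrightarrow> Mr_point \<Omega> \<mu>"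
  unfolding Pr_point_def Mr_point_def by (auto simp: prob_space_def prob_space_axioms_def)

lemma TP_TM: "TP r \<mu> \<phi> \<Longrightarrow> TM r \<mu> \<phi>"
  unfolding TP_def TM_def by simp

theorem proposition3p7:
  fixes r :: real and n :: nat
    and a :: "nat set set \<Rightarrow> real \<Rightarrow> real"
    and c :: "nat set set \<Rightarrow> real"
  assumes r: "0 < r" "r \<le> 1"
    and a_cont: "\<forall>P\<in>partsM r n. continuous_on {0<..} (a P)"
  shows
    "(\<forall>\<Omega> :: 'a measure. tensor_field r n (Mr_point \<Omega>) (TM r) (tildeTheta r n a)) \<and>
     (\<forall>(\<Omega> :: 'a measure) (\<Omega>' :: 'b measure) K \<mu> V.
        congruent_kernel \<Omega> \<Omega>' K \<and> Mr_point \<Omega> \<mu> \<and> (\<forall>j\<in>{1..n}. TM r \<mu> (V j))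
        \<longrightarrow> pullback \<Omega>' K (tildeTheta r n a) \<mu> V = tildeTheta r n a \<mu> V) \<and>
     (\<forall>\<Omega> :: 'a measure. tensor_field r n (Pr_point \<Omega>) (TP r) (Theta r n c)) \<and>
     (\<forall>(\<Omega> :: 'a measure) (\<Omega>' :: 'b measure) K \<mu> V.
        congruent_kernel \<Omega> \<Omega>' K \<and> Pr_point \<Omega> \<mu> \<and> (\<forall>j\<in>{1..n}. TP r \<mu> (V j))
        \<longrightarrow> pullback \<Omega>' K (Theta r n c) \<mu> V = Theta r n c \<mu> V)"
proof -
  have tT: "tildeTheta r n a = GenTheta r (partsM r n) a"
    by (intro ext) (simp add: tildeTheta_def GenTheta_def)
  have TT: "Theta r n c = GenTheta r (partsP r n) (\<lambda>P _. c P)"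
    by (intro ext) (simp add: Theta_def GenTheta_def)
  have Psub: "partsP r n \<subseteq> partsM r n" unfolding partsP_def partsM_def by auto
  have contP: "\<forall>P\<in>partsP r n. continuous_on {0<..} (\<lambda>_::real. c P)" by (auto intro: continuous_on_const)
  show ?thesis
  proof (intro conjI allI impI)
    fix \<Omega> :: "'a measure"
    show "tensor_field r n (Mr_point \<Omega>) (TM r) (tildeTheta r n a)"
      unfolding tT by (rule gen_tensor[OF r order_refl a_cont])
  next
    fix \<Omega> :: "'a measure" and \<Omega>' :: "'b measure" and K \<mu> V
    assume H: "congruent_kernel \<Omega> \<Omega>' K \<and> Mr_point \<Omega> \<mu> \<and> (\<forall>j\<in>{1..n}. TM r \<mu> (V j))"
    show "pullback \<Omega>' K (tildeTheta r n a) \<mu> V = tildeTheta r n a \<mu> V"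
      unfolding tT using gen_congruent[OF r order_refl] H by blast
  next
    fix \<Omega> :: "'a measure"
    show "tensor_field r n (Pr_point \<Omega>) (TP r) (Theta r n c)"
      unfolding TT by (rule tensor_field_mono[OF gen_tensor[OF r Psub contP]]) (auto intro: Pr_Mr TP_TM)
  next
    fix \<Omega> :: "'a measure" and \<Omega>' :: "'b measure" and K \<mu> V
    assume H: "congruent_kernel \<Omega> \<Omega>' K \<and> Pr_point \<Omega> \<mu> \<and> (\<forall>j\<in>{1..n}. TP r \<mu> (V j))"
    then have H': "congruent_kernel \<Omega> \<Omega>' K" "Mr_point \<Omega> \<mu>" "\<forall>j\<in>{1..n}. TM r \<mu> (V j)"
      using Pr_Mr TP_TM by blast+
    show "pullback \<Omega>' K (Theta r n c) \<mu> V = Theta r n c \<mu> V"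
      unfolding TT by (rule gen_congruent[OF r Psub H'])
  qed
qed

end
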